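(* Let $B=(V,E)$ be a simple Bratteli diagram whose dimension group $K^0(V,E)$ with order unit $u=[v^0]$ has rational subgroup $\mathbb Q(K^0(V,E),u)=\mathbb Z u$. Then there exist a telescoping $\tilde B$ of $B$ and a proper ordering on $\tilde B$ such that the associated Bratteli–Vershik system $(X_{\tilde B},T_{\tilde B})$ is weakly mixing.
   Context: A Bratteli diagram $(V,E)$ has vertex set $V=V_0\sqcup V_1\sqcup\cdots$ with $V_0=\{v^0\}$, finite nonempty $V_k$, and edge set $E=E_1\sqcup E_2\sqcup\cdots$ with $E_k$ finite, source map $s(E_k)\subseteq V_{k-1}$ and range map $r(E_k)\subseteq V_k$; $A_k$ is the $|V_k|\times|V_{k-1}|$ incidence matrix counting edges. Telescoping along $0=n_0<n_1<\cdots$ keeps only levels $V_{n_k}$, with edges between consecutive kept levels being the finite paths between them. The diagram is simple if some telescoping has all incidence matrices strictly positive. Its dimension group $K^0(V,E)$ is the direct limit of $\mathbb Z^{V_0}\xrightarrow{A_1}\mathbb Z^{V_1}\xrightarrow{A_2}\cdots$ with positive cone the union of images of $\mathbb Z_+^{V_k}$, and order unit $u=[v^0]$ the class of $1\in\mathbb Z^{V_0}$. For a partially ordered group $G$ with order unit $u$, the rational subgroup is $\mathbb Q(G,u)=\{g\in G: pg=nu\text{ for some nonzero } p\in\mathbb Z \text{ and some } n\in\mathbb Z\}$. An ordering on $(V,E)$ is a linear order on each $r^{-1}(v)$, $v\in V\setminus V_0$; it induces an order on finite paths between levels (compare the last differing edge). $X_B$ is the space of infinite paths $(e_1,e_2,\dots)$,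 $e_i\in E_i$, $r(e_i)=s(e_{i+1})$, with the topology generated by cylinder sets. The ordering is proper if the diagram is simple and there is a unique path of all maximal edges $x_{\max}$ and a unique path of all minimal edges $x_{\min}$. The Vershik map $T_B$ sends $x_{\max}$ to $x_{\min}$ and any other path $(e_1,e_2,\dots)$, with $k$ least such that $e_k$ is not maximal, to $(f_1,\dots,f_{k-1},f_k,e_{k+1},\dots)$ where $f_k$ is the successor of $e_k$ and $(f_1,\dots,f_{k-1})$ is the minimal path from $v^0$ to $s(f_k)$. A system $(X,T)$ is weakly mixing if $(X\times X,T\times T)$ is topologically transitive. *)

theory Defs
  imports "HOL-Analysis.Analysis"
begin

text \<open>Level-indexed data: V k is the vertex set of level k; E k (k \<ge> 1) the edge set of
level k; bs k e and br k e are source (in V (k-1)) and range (in V k) of an edge e of level k.\<close>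

record ('v, 'e) bdiag =
  bV :: "nat \<Rightarrow> 'v set"
  bE :: "nat \<Rightarrow> 'e set"
  bs :: "nat \<Rightarrow> 'e \<Rightarrow> 'v"
  br :: "nat \<Rightarrow> 'e \<Rightarrow> 'v"

definition bratteli :: "('v, 'e) bdiag \<Rightarrow> bool" where
  "bratteli B \<longleftrightarrow>
     (\<exists>v0. bV B 0 = {v0}) \<and>
     (\<forall>k. finite (bV B k) \<and> bV B k \<noteq> {}) \<and>
     bE B 0 = {} \<and>
     (\<forall>k. finite (bE B k)) \<and>
     (\<forall>k. \<forall>e\<in>bE B (Suc k). bs B (Suc k) e \<in> bV B k \<and> br B (Suc k) e \<in> bV B (Suc k))"

text \<open>Finite paths from level m to level n (m < n): lists [e_(m+1), ..., e_n].\<close>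

definition fpath :: "('v, 'e) bdiag \<Rightarrow> nat \<Rightarrow> nat \<Rightarrow> 'e list \<Rightarrow> bool" where
  "fpath B m n p \<longleftrightarrow> m < n \<and> length p = n - m \<and>
     (\<forall>i < n - m. p ! i \<in> bE B (Suc (m + i))) \<and>
     (\<forall>i. Suc i < n - m \<longrightarrow> br B (Suc (m + i)) (p ! i) = bs B (Suc (Suc (m + i))) (p ! Suc i))"

definition telescope :: "('v, 'e) bdiag \<Rightarrow> (nat \<Rightarrow> nat) \<Rightarrow> ('v, 'e list) bdiag" where
  "telescope B n = \<lparr> bV = (\<lambda>k. bV B (n k)),
     bE = (\<lambda>k. case k of 0 \<Rightarrow> {} | Suc j \<Rightarrow> {p. fpath B (n j) (n (Suc j)) p}),
     bs = (\<lambda>k p. case k of 0 \<Rightarrow> undefined | Suc j \<Rightarrow> bs B (Suc (n j)) (hd p)),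
     br = (\<lambda>k p. case k of 0 \<Rightarrow> undefined | Suc j \<Rightarrow> br B (n (Suc j)) (last p)) \<rparr>"

definition is_telescoping_seq :: "(nat \<Rightarrow> nat) \<Rightarrow> bool" where
  "is_telescoping_seq n \<longleftrightarrow> n 0 = 0 \<and> strict_mono n"

definition positive_incidence :: "('v, 'e) bdiag \<Rightarrow> bool" where
  "positive_incidence B \<longleftrightarrow>
     (\<forall>k. \<forall>v\<in>bV B k. \<forall>w\<in>bV B (Suc k).
        \<exists>e\<in>bE B (Suc k). bs B (Suc k) e = v \<and> br B (Suc k) e = w)"

definition simple_bratteli :: "('v, 'e) bdiag \<Rightarrow> bool" where
  "simple_bratteli B \<longleftrightarrow> bratteli B \<and>
     (\<exists>n. is_telescoping_seq n \<and> positive_incidence (telescope B n))"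

text \<open>push B k m a: image of a \<in> Z^(V_k) in Z^(V_m) under A_m \<circ> ... \<circ> A_(k+1), for m \<ge> k;
  (A_j a)(w) = sum over edges e of level j with range w of a(source e).\<close>

fun push :: "('v, 'e) bdiag \<Rightarrow> nat \<Rightarrow> nat \<Rightarrow> ('v \<Rightarrow> int) \<Rightarrow> 'v \<Rightarrow> int" where
  "push B k 0 a = a"
| "push B k (Suc m) a =
     (if Suc m \<le> k then a
      else (\<lambda>w. \<Sum>e\<in>{e\<in>bE B (Suc m). br B (Suc m) e = w}. push B k m a (bs B (Suc m) e)))"

text \<open>Two representatives (k,a), (l,b) define the same element of the direct limit.\<close>

definition dim_eq :: "('v, 'e) bdiag \<Rightarrow> nat \<Rightarrow> ('v \<Rightarrow> int) \<Rightarrow> nat \<Rightarrow> ('v \<Rightarrow> int) \<Rightarrow> bool" where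
  "dim_eq B k a l b \<longleftrightarrow> (\<exists>m \<ge> max k l. \<forall>w\<in>bV B m. push B k m a w = push B l m b w)"

definition dim_class :: "('v, 'e) bdiag \<Rightarrow> nat \<Rightarrow> ('v \<Rightarrow> int) \<Rightarrow> (nat \<times> ('v \<Rightarrow> int)) set" where
  "dim_class B k a = {(l, b). dim_eq B k a l b}"

text \<open>The dimension group K^0(V,E) as set of classes; the order unit [v^0] is the class of 1 at level 0.\<close>

definition K0 :: "('v, 'e) bdiag \<Rightarrow> (nat \<times> ('v \<Rightarrow> int)) set set" where
  "K0 B = {dim_class B k a | k a. True}"

definition order_unit :: "('v, 'e) bdiag \<Rightarrow> (nat \<times> ('v \<Rightarrow> int)) set" where
  "order_unit B = dim_class B 0 (\<lambda>_. 1)"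

text \<open>Rational subgroup: classes g with p g = n u for some p \<noteq> 0, n \<in> Z.
  (Integer multiples are computed on representatives.)\<close>

definition rational_subgroup :: "('v, 'e) bdiag \<Rightarrow> (nat \<times> ('v \<Rightarrow> int)) set set" where
  "rational_subgroup B = {dim_class B k a | k a.
      \<exists>p n. p \<noteq> (0::int) \<and> dim_class B k (\<lambda>v. p * a v) = dim_class B 0 (\<lambda>_. n)}"

definition int_multiples_of_unit :: "('v, 'e) bdiag \<Rightarrow> (nat \<times> ('v \<Rightarrow> int)) set set" where
  "int_multiples_of_unit B = {dim_class B 0 (\<lambda>_. n) | n. True}"

definition fibre :: "('v, 'e) bdiag \<Rightarrow> nat \<Rightarrow> 'v \<Rightarrow> 'e set" where
  "fibre B k v = {e \<in> bE B k. br B k e = v}"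

definition ordering :: "('v, 'e) bdiag \<Rightarrow> (nat \<Rightarrow> 'e rel) \<Rightarrow> bool" where
  "ordering B om \<longleftrightarrow> (\<forall>k. \<forall>v\<in>bV B (Suc k).
      linear_order_on (fibre B (Suc k) v) (om (Suc k) \<inter> (fibre B (Suc k) v \<times> fibre B (Suc k) v)))"

definition is_max_edge :: "('v, 'e) bdiag \<Rightarrow> (nat \<Rightarrow> 'e rel) \<Rightarrow> nat \<Rightarrow> 'e \<Rightarrow> bool" where
  "is_max_edge B om k e \<longleftrightarrow> (\<forall>e'\<in>fibre B k (br B k e). (e', e) \<in> om k)"

definition is_min_edge :: "('v, 'e) bdiag \<Rightarrow> (nat \<Rightarrow> 'e rel) \<Rightarrow> nat \<Rightarrow> 'e \<Rightarrow> bool" where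
  "is_min_edge B om k e \<longleftrightarrow> (\<forall>e'\<in>fibre B k (br B k e). (e, e') \<in> om k)"

text \<open>Infinite paths: x i is the edge of level i+1.\<close>

definition path_space :: "('v, 'e) bdiag \<Rightarrow> (nat \<Rightarrow> 'e) set" where
  "path_space B = {x. (\<forall>i. x i \<in> bE B (Suc i)) \<and>
      (\<forall>i. br B (Suc i) (x i) = bs B (Suc (Suc i)) (x (Suc i)))}"

definition cylinder :: "('v, 'e) bdiag \<Rightarrow> 'e list \<Rightarrow> (nat \<Rightarrow> 'e) set" where
  "cylinder B p = {x \<in> path_space B. \<forall>i < length p. x i = p ! i}"

definition path_topology :: "('v, 'e) bdiag \<Rightarrow> (nat \<Rightarrow> 'e) topology" where
  "path_topology B = topology_generated_by (range (cylinder B))"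

definition max_path :: "('v, 'e) bdiag \<Rightarrow> (nat \<Rightarrow> 'e rel) \<Rightarrow> (nat \<Rightarrow> 'e) \<Rightarrow> bool" where
  "max_path B om x \<longleftrightarrow> x \<in> path_space B \<and> (\<forall>i. is_max_edge B om (Suc i) (x i))"

definition min_path :: "('v, 'e) bdiag \<Rightarrow> (nat \<Rightarrow> 'e rel) \<Rightarrow> (nat \<Rightarrow> 'e) \<Rightarrow> bool" where
  "min_path B om x \<longleftrightarrow> x \<in> path_space B \<and> (\<forall>i. is_min_edge B om (Suc i) (x i))"

definition proper_ordering :: "('v, 'e) bdiag \<Rightarrow> (nat \<Rightarrow> 'e rel) \<Rightarrow> bool" where
  "proper_ordering B om \<longleftrightarrow> simple_bratteli B \<and> ordering B om \<and>
      (\<exists>!x. max_path B om x) \<and> (\<exists>!x. min_path B om x)"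

definition min_edge_into :: "('v, 'e) bdiag \<Rightarrow> (nat \<Rightarrow> 'e rel) \<Rightarrow> nat \<Rightarrow> 'v \<Rightarrow> 'e" where
  "min_edge_into B om k w = (THE e. e \<in> fibre B k w \<and> (\<forall>e'\<in>fibre B k w. (e, e') \<in> om k))"

fun min_fpath :: "('v, 'e) bdiag \<Rightarrow> (nat \<Rightarrow> 'e rel) \<Rightarrow> nat \<Rightarrow> 'v \<Rightarrow> 'e list" where
  "min_fpath B om 0 w = []"
| "min_fpath B om (Suc k) w =
     (let e = min_edge_into B om (Suc k) w in min_fpath B om k (bs B (Suc k) e) @ [e])"

definition succ_edge :: "('v, 'e) bdiag \<Rightarrow> (nat \<Rightarrow> 'e rel) \<Rightarrow> nat \<Rightarrow> 'e \<Rightarrow> 'e" where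
  "succ_edge B om k e = (THE f. f \<in> fibre B k (br B k e) \<and> f \<noteq> e \<and> (e, f) \<in> om k \<and>
      (\<forall>g\<in>fibre B k (br B k e). g \<noteq> e \<and> (e, g) \<in> om k \<longrightarrow> (f, g) \<in> om k))"

definition vershik :: "('v, 'e) bdiag \<Rightarrow> (nat \<Rightarrow> 'e rel) \<Rightarrow> (nat \<Rightarrow> 'e) \<Rightarrow> (nat \<Rightarrow> 'e)" where
  "vershik B om x =
     (if max_path B om x then (THE y. min_path B om y)
      else (let j = (LEAST i. \<not> is_max_edge B om (Suc i) (x i));
                f = succ_edge B om (Suc j) (x j);
                q = min_fpath B om j (bs B (Suc j) f)
            in (\<lambda>i. if i < j then q ! i else if i = j then f else x i)))"

definition top_transitive :: "'a topology \<Rightarrow> ('a \<Rightarrow> 'a) \<Rightarrow> bool" where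
  "top_transitive X T \<longleftrightarrow> (\<forall>U W. openin X U \<and> openin X W \<and> U \<noteq> {} \<and> W \<noteq> {} \<longrightarrow>
      (\<exists>n>0. (T ^^ n) ` U \<inter> W \<noteq> {}))"

definition weakly_mixing :: "'a topology \<Rightarrow> ('a \<Rightarrow> 'a) \<Rightarrow> bool" where
  "weakly_mixing X T \<longleftrightarrow> top_transitive (prod_topology X X) (\<lambda>(x, y). (T x, T y))"

end

theory Submission
  imports Defs
begin

locale brat = fixes B :: "('v,'e) bdiag" assumes brat: "bratteli B"
begin

lemma V_fin: "finite (bV B k)" and V_ne: "bV B k \<noteq> {}" and E_fin: "finite (bE B k)"
  using brat unfolding bratteli_def by auto

lemma E_bs: "e \<in> bE B (Suc k) \<Longrightarrow> bs B (Suc k) e \<in> bV B k"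
  and E_br: "e \<in> bE B (Suc k) \<Longrightarrow> br B (Suc k) e \<in> bV B (Suc k)"
  using brat unfolding bratteli_def by auto

lemma push_le: "m \<le> k \<Longrightarrow> push B k m a = a"
  by (induction m) auto

lemma push_same[simp]: "push B k k a = a" by (rule push_le) simp

lemma push_Suc: "k \<le> m \<Longrightarrow> push B k (Suc m) a =
   (\<lambda>w. \<Sum>e\<in>{e\<in>bE B (Suc m). br B (Suc m) e = w}. push B k m a (bs B (Suc m) e))"
  by simp

lemma push_cong: "k \<le> m \<Longrightarrow> (\<forall>v\<in>bV B k. a v = b v) \<Longrightarrow> w \<in> bV B m \<Longrightarrow>
   push B k m a w = push B k m b w"
proof (induction m arbitrary: w)
  case 0 then show ?case by simp
next
  case (Suc m)
  show ?case
  proof (cases "Suc m \<le> k")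
    case True then have "k = Suc m" using Suc by simp
    then show ?thesis using Suc by simp
  next
    case False
    then have km: "k \<le> m" by simp
    show ?thesis unfolding push_Suc[OF km]
      by (rule sum.cong) (auto intro!: Suc.IH km Suc.prems E_bs)
  qed
qed

lemma push_comp: "k \<le> l \<Longrightarrow> l \<le> m \<Longrightarrow> w \<in> bV B m \<Longrightarrow>
   push B k m a w = push B l m (push B k l a) w"
proof (induction m arbitrary: w)
  case 0 then show ?case by simp
next
  case (Suc m)
  show ?case
  proof (cases "l = Suc m")
    case True then show ?thesis by simp
  next
    case False
    then have lm: "l \<le> m" using Suc by simp
    then have km: "k \<le> m" using Suc by simp
    show ?thesis unfolding push_Suc[OF km] push_Suc[OF lm]
      by (rule sum.cong) (auto intro!: Suc.IH km lm Suc.prems E_bs)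
  qed
qed

lemma push_smult: "push B k m (\<lambda>v. c * a v) w = c * push B k m a w"
proof (induction m arbitrary: w)
  case (Suc m) then show ?case by (simp add: sum_distrib_left)
qed simp

lemma push_sum: "finite S \<Longrightarrow> push B k m (\<lambda>v. \<Sum>u\<in>S. f u v) w = (\<Sum>u\<in>S. push B k m (f u) w)"
proof (induction m arbitrary: w)
  case (Suc m) then show ?case by (simp add: sum.swap[of _ S])
qed simp

lemma push_mono: "k \<le> m \<Longrightarrow> (\<forall>v\<in>bV B k. a v \<le> b v) \<Longrightarrow> w \<in> bV B m \<Longrightarrow>
   push B k m a w \<le> push B k m b w"
proof (induction m arbitrary: w)
  case 0 then show ?case by simp
next
  case (Suc m)
  show ?case
  proof (cases "Suc m \<le> k")
    case True then have "k = Suc m" using Suc by simp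
    then show ?thesis using Suc by simp
  next
    case False
    then have km: "k \<le> m" by simp
    show ?thesis unfolding push_Suc[OF km]
      by (rule sum_mono) (auto intro!: Suc.IH km Suc.prems E_bs)
  qed
qed

lemma push_nonneg: "k \<le> m \<Longrightarrow> (\<forall>v\<in>bV B k. 0 \<le> a v) \<Longrightarrow> w \<in> bV B m \<Longrightarrow> 0 \<le> push B k m a w"
  using push_mono[of k m "\<lambda>_. 0" a w] push_smult[of k m 0 "\<lambda>_. 0" w] by simp

definition H :: "nat \<Rightarrow> 'v \<Rightarrow> int" where "H l = push B 0 l (\<lambda>_. 1)"

definition dl :: "'v \<Rightarrow> 'v \<Rightarrow> int" where "dl u = (\<lambda>v. if v = u then 1 else 0)"

lemma dim_eq_refl: "dim_eq B k a k a"
  unfolding dim_eq_def by auto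

lemma dim_eq_trans: assumes "dim_eq B k a l b" "dim_eq B l b j c" shows "dim_eq B k a j c"
proof -
  obtain m1 where m1: "m1 \<ge> max k l" "\<forall>w\<in>bV B m1. push B k m1 a w = push B l m1 b w"
    using assms(1) unfolding dim_eq_def by blast
  obtain m2 where m2: "m2 \<ge> max l j" "\<forall>w\<in>bV B m2. push B l m2 b w = push B j m2 c w"
    using assms(2) unfolding dim_eq_def by blast
  define m where "m = max m1 m2"
  have "\<forall>w\<in>bV B m. push B k m a w = push B j m c w"
  proof
    fix w assume w: "w \<in> bV B m"
    have "push B k m a w = push B m1 m (push B k m1 a) w"
      using m1 w by (intro push_comp) (auto simp: m_def)
    also have "\<dots> = push B m1 m (push B l m1 b) w"
      using m1 w by (intro push_cong) (auto simp: m_def)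
    also have "\<dots> = push B l m b w"
      using m1 w by (intro push_comp[symmetric]) (auto simp: m_def)
    also have "\<dots> = push B m2 m (push B l m2 b) w"
      using m2 w by (intro push_comp) (auto simp: m_def)
    also have "\<dots> = push B m2 m (push B j m2 c) w"
      using m2 w by (intro push_cong) (auto simp: m_def)
    also have "\<dots> = push B j m c w"
      using m2 w by (intro push_comp[symmetric]) (auto simp: m_def)
    finally show "push B k m a w = push B j m c w" .
  qed
  moreover have "m \<ge> max k j" using m1 m2 by (auto simp: m_def)
  ultimately show ?thesis unfolding dim_eq_def by blast
qed

lemma dim_eq_sym: "dim_eq B k a l b \<Longrightarrow> dim_eq B l b k a"
  unfolding dim_eq_def by (metis max.commute)

lemma dim_class_eq: "dim_eq B k a l b \<Longrightarrow> dim_class B k a = dim_class B l b"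
  unfolding dim_class_def using dim_eq_trans dim_eq_sym by blast

lemma gcd_one:
  assumes hyp: "rational_subgroup B = int_multiples_of_unit B"
    and pos: "\<forall>m. \<exists>m'\<ge>m. \<exists>w\<in>bV B m'. H m' w \<noteq> 0"
  shows "Gcd (H l ` bV B l) = 1"
proof -
  define d where "d = Gcd (H l ` bV B l)"
  have fin: "finite (H l ` bV B l)" using V_fin by simp
  have dvd: "\<forall>v\<in>bV B l. d dvd H l v" unfolding d_def by auto
  have d0: "d \<ge> 0" unfolding d_def by simp
  have dne: "d \<noteq> 0"
  proof
    assume "d = 0"
    then have z: "\<forall>v\<in>bV B l. H l v = 0" using dvd by auto
    obtain m' w where m': "m' \<ge> l" "w \<in> bV B m'" "H m' w \<noteq> 0" using pos by blast
    have "H m' w = push B l m' (H l) w" unfolding H_def using m' by (intro push_comp) auto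
    also have "\<dots> = push B l m' (\<lambda>v. 0 * H l v) w" using m' z by (intro push_cong) auto
    also have "\<dots> = 0" using push_smult[of l m' 0 "H l" w] by simp
    finally show False using m' by simp
  qed
  define a where "a = (\<lambda>v. H l v div d)"
  have da: "\<forall>v\<in>bV B l. d * a v = H l v" using dvd unfolding a_def by auto
  have "dim_eq B l (\<lambda>v. d * a v) 0 (\<lambda>_. 1)"
    unfolding dim_eq_def using da by (intro exI[of _ l]) (auto simp: H_def)
  then have "dim_class B l (\<lambda>v. d * a v) = dim_class B 0 (\<lambda>_. 1)" by (rule dim_class_eq)
  then have "dim_class B l a \<in> rational_subgroup B"
    unfolding rational_subgroup_def using dne by blast
  then obtain n where n: "dim_class B l a = dim_class B 0 (\<lambda>_. n)"
    using hyp unfolding int_multiples_of_unit_def by auto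
  have "(l, a) \<in> dim_class B l a" unfolding dim_class_def using dim_eq_refl by simp
  then have "dim_eq B 0 (\<lambda>_. n) l a" using n unfolding dim_class_def by simp
  then obtain m where m: "m \<ge> l" "\<forall>w\<in>bV B m. push B 0 m (\<lambda>_. n) w = push B l m a w"
    unfolding dim_eq_def by auto
  obtain m' w where m': "m' \<ge> m" "w \<in> bV B m'" "H m' w \<noteq> 0" using pos by blast
  have "n * H m' w = push B 0 m' (\<lambda>_. n * 1) w" unfolding H_def by (rule push_smult[symmetric])
  also have "\<dots> = push B m m' (push B 0 m (\<lambda>_. n)) w" using push_comp[of 0 m m' w "\<lambda>_. n"] m' by simp
  also have "\<dots> = push B m m' (push B l m a) w" using m m' by (intro push_cong) auto
  also have "\<dots> = push B l m' a w" using m m' by (intro push_comp[symmetric]) auto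
  finally have e1: "n * H m' w = push B l m' a w" .
  have "d * push B l m' a w = push B l m' (\<lambda>v. d * a v) w" by (rule push_smult[symmetric])
  also have "\<dots> = push B l m' (H l) w" using m m' da by (intro push_cong) auto
  also have "\<dots> = H m' w" unfolding H_def using m m' by (intro push_comp[symmetric]) auto
  finally have "d * n * H m' w = H m' w" using e1 by (simp add: mult.assoc)
  then have "d * n = 1" using m' by simp
  then have "d = 1" using d0 by (simp add: zmult_eq_1_iff)
  then show ?thesis unfolding d_def .
qed

end

context brat begin

lemma fpath_one: "fpath B l (Suc l) q \<longleftrightarrow> (\<exists>e. q = [e] \<and> e \<in> bE B (Suc l))"
proof
  assume "fpath B l (Suc l) q"
  then have "length q = 1" "q ! 0 \<in> bE B (Suc l)" unfolding fpath_def by auto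
  then show "\<exists>e. q = [e] \<and> e \<in> bE B (Suc l)"
    by (metis One_nat_def length_0_conv length_Suc_conv nth_Cons_0)
qed (auto simp: fpath_def)

lemma fpath_len: "fpath B l l' q \<Longrightarrow> length q = l' - l \<and> l < l'"
  unfolding fpath_def by auto

lemma fpath_ne: "fpath B l l' q \<Longrightarrow> q \<noteq> []"
  unfolding fpath_def by auto

lemma fpath_hd: "fpath B l l' q \<Longrightarrow> hd q \<in> bE B (Suc l)"
proof -
  assume f: "fpath B l l' q"
  then have "q \<noteq> []" "0 < l' - l" unfolding fpath_def by auto
  then have "q ! (0::nat) \<in> bE B (Suc (l + 0))" using f unfolding fpath_def by blast
  then show ?thesis using \<open>q \<noteq> []\<close> by (simp add: hd_conv_nth)
qed

lemma fpath_last: "fpath B l l' q \<Longrightarrow> last q \<in> bE B l'"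
proof -
  assume f: "fpath B l l' q"
  then have "q \<noteq> []" "length q = l' - l" "l < l'" unfolding fpath_def by auto
  then have "last q = q ! (l' - l - 1)" "l' - l - 1 < l' - l" "Suc (l + (l' - l - 1)) = l'"
    by (auto simp: last_conv_nth)
  then show ?thesis using f unfolding fpath_def by metis
qed

lemma fpath_hd_V: "fpath B l l' q \<Longrightarrow> bs B (Suc l) (hd q) \<in> bV B l"
  using fpath_hd E_bs by blast

lemma fpath_last_V: "fpath B l l' q \<Longrightarrow> br B l' (last q) \<in> bV B l'"
  using fpath_last E_br fpath_len by (metis Suc_pred' gr0I less_nat_zero_code)

lemma fpath_snoc:
  assumes "l < l'"
  shows "fpath B l (Suc l') q \<longleftrightarrow> (\<exists>q' e. q = q' @ [e] \<and> fpath B l l' q' \<and> e \<in> bE B (Suc l') \<and>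
            br B l' (last q') = bs B (Suc l') e)"
proof
  assume f: "fpath B l (Suc l') q"
  define q' where "q' = butlast q"
  define e where "e = last q"
  have len: "length q = Suc (l' - l)" using f assms unfolding fpath_def by auto
  then have qe: "q = q' @ [e]" unfolding q'_def e_def
    by (metis append_butlast_last_id list.size(3) nat.distinct(1))
  have lq': "length q' = l' - l" using len qe by simp
  have nth: "\<And>i. i < l' - l \<Longrightarrow> q ! i = q' ! i" using qe lq' by (simp add: nth_append)
  have ne: "q ! (l' - l) = e" using qe lq' by (simp add: nth_append)
  have "fpath B l l' q'"
    unfolding fpath_def
  proof (intro conjI allI impI)
    show "l < l'" "length q' = l' - l" using assms lq' by auto
    fix i assume i: "i < l' - l"
    then have "i < Suc l' - l" by simp
    then show "q' ! i \<in> bE B (Suc (l + i))" using f nth[OF i] unfolding fpath_def by auto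
  next
    fix i assume i: "Suc i < l' - l"
    then have "Suc i < Suc l' - l" by simp
    then show "br B (Suc (l + i)) (q' ! i) = bs B (Suc (Suc (l + i))) (q' ! Suc i)"
      using f nth[of i] nth[of "Suc i"] i unfolding fpath_def by auto
  qed
  moreover have "e \<in> bE B (Suc l')"
    using f ne assms unfolding fpath_def by (metis Suc_diff_le le_add_diff_inverse lessI less_imp_le_nat)
  moreover have "br B l' (last q') = bs B (Suc l') e"
  proof -
    have lst: "last q' = q' ! (l' - l - 1)" using lq' assms by (subst last_conv_nth) auto
    have "Suc (l' - l - 1) < Suc l' - l" using assms by simp
    then have "br B (Suc (l + (l' - l - 1))) (q ! (l' - l - 1)) = bs B (Suc (Suc (l + (l' - l - 1)))) (q ! Suc (l' - l - 1))"
      using f unfolding fpath_def by blast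
    moreover have "Suc (l + (l' - l - 1)) = l'" "Suc (l' - l - 1) = l' - l" using assms by auto
    ultimately show ?thesis using lst nth[of "l' - l - 1"] ne assms by auto
  qed
  ultimately show "\<exists>q' e. q = q' @ [e] \<and> fpath B l l' q' \<and> e \<in> bE B (Suc l') \<and>
            br B l' (last q') = bs B (Suc l') e" using qe by blast
next
  assume "\<exists>q' e. q = q' @ [e] \<and> fpath B l l' q' \<and> e \<in> bE B (Suc l') \<and> br B l' (last q') = bs B (Suc l') e"
  then obtain q' e where qe: "q = q' @ [e]" and f: "fpath B l l' q'" and e: "e \<in> bE B (Suc l')"
    and c: "br B l' (last q') = bs B (Suc l') e" by blast
  have lq': "length q' = l' - l" using f unfolding fpath_def by auto
  have lst: "last q' = q' ! (l' - l - 1)" using lq' assms by (subst last_conv_nth) auto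
  show "fpath B l (Suc l') q"
    unfolding fpath_def
  proof (intro conjI allI impI)
    show "l < Suc l'" "length q = Suc l' - l" using assms lq' qe by auto
    fix i assume i: "i < Suc l' - l"
    show "q ! i \<in> bE B (Suc (l + i))"
    proof (cases "i < l' - l")
      case True then show ?thesis using f qe lq' unfolding fpath_def by (auto simp: nth_append)
    next
      case False then have "i = l' - l" using i assms by auto
      then show ?thesis using qe lq' e assms by (auto simp: nth_append)
    qed
  next
    fix i assume i: "Suc i < Suc l' - l"
    show "br B (Suc (l + i)) (q ! i) = bs B (Suc (Suc (l + i))) (q ! Suc i)"
    proof (cases "Suc i < l' - l")
      case True then show ?thesis using f qe lq' unfolding fpath_def by (auto simp: nth_append)
    next
      case False then have ii: "Suc i = l' - l" using i assms by auto
      then have "Suc (l + i) = l'" "i = l' - l - 1" using assms by auto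
      then show ?thesis using qe lq' c lst ii by (auto simp: nth_append)
    qed
  qed
qed

lemma fpath_fin: "finite {q. fpath B l l' q}"
proof -
  have "{q. fpath B l l' q} \<subseteq> {xs. set xs \<subseteq> (\<Union>k\<le>l'. bE B k) \<and> length xs = l' - l}"
  proof safe
    fix q x assume f: "fpath B l l' q" and x: "x \<in> set q"
    then obtain i where i: "i < length q" "q ! i = x" by (auto simp: in_set_conv_nth)
    then have "x \<in> bE B (Suc (l + i))" "Suc (l + i) \<le> l'" using f unfolding fpath_def by auto
    then show "x \<in> (\<Union>k\<le>l'. bE B k)" by blast
  qed (auto simp: fpath_def)
  moreover have "finite {xs. set xs \<subseteq> (\<Union>k\<le>l'. bE B k) \<and> length xs = l' - l}"
    by (rule finite_lists_length_eq) (auto simp: E_fin)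
  ultimately show ?thesis by (rule finite_subset)
qed

definition PS :: "nat \<Rightarrow> nat \<Rightarrow> 'v \<Rightarrow> 'e list set" where
  "PS l l' w = {q. fpath B l l' q \<and> br B l' (last q) = w}"

lemma PS_fin: "finite (PS l l' w)"
  unfolding PS_def by (rule finite_subset[OF _ fpath_fin]) auto

lemma push_paths:
  assumes "l < l'" "w \<in> bV B l'"
  shows "push B l l' a w = (\<Sum>q\<in>PS l l' w. a (bs B (Suc l) (hd q)))"
  using assms
proof (induction l' arbitrary: w)
  case 0 then show ?case by simp
next
  case (Suc l'')
  define F where "F = {e\<in>bE B (Suc l''). br B (Suc l'') e = w}"
  have Ffin: "finite F" unfolding F_def using E_fin by simp
  show ?case
  proof (cases "l'' = l")
    case True
    have PSe: "PS l (Suc l'') w = (\<lambda>e. [e]) ` F" unfolding PS_def F_def using fpath_one True by auto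
    have "push B l (Suc l'') a w = (\<Sum>e\<in>F. a (bs B (Suc l'') e))"
      unfolding push_Suc[of l l'', OF eq_imp_le[OF True[symmetric]]] F_def using True by simp
    then show ?thesis unfolding PSe using True by (simp add: sum.reindex inj_on_def)
  next
    case False
    then have ll: "l < l''" using Suc by simp
    have "push B l (Suc l'') a w = (\<Sum>e\<in>F. push B l l'' a (bs B (Suc l'') e))"
      unfolding push_Suc[OF less_imp_le[OF ll]] F_def by simp
    also have "\<dots> = (\<Sum>e\<in>F. \<Sum>q\<in>PS l l'' (bs B (Suc l'') e). a (bs B (Suc l) (hd q)))"
      by (rule sum.cong) (auto simp: F_def intro!: Suc.IH ll E_bs)
    also have "\<dots> = (\<Sum>(e,q)\<in>(SIGMA e:F. PS l l'' (bs B (Suc l'') e)). a (bs B (Suc l) (hd q)))"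
      by (rule sum.Sigma) (auto simp: Ffin PS_fin)
    also have "\<dots> = (\<Sum>q\<in>(\<lambda>(e,q). q @ [e]) ` (SIGMA e:F. PS l l'' (bs B (Suc l'') e)). a (bs B (Suc l) (hd q)))"
    proof (subst sum.reindex)
      show "inj_on (\<lambda>(e, q). q @ [e]) (SIGMA e:F. PS l l'' (bs B (Suc l'') e))"
        by (auto simp: inj_on_def)
      show "(\<Sum>(e, q)\<in>(SIGMA e:F. PS l l'' (bs B (Suc l'') e)). a (bs B (Suc l) (hd q))) =
            sum ((\<lambda>q. a (bs B (Suc l) (hd q))) \<circ> (\<lambda>(e, q). q @ [e])) (SIGMA e:F. PS l l'' (bs B (Suc l'') e))"
        by (rule sum.cong) (auto simp: PS_def dest!: fpath_ne)
    qed
    also have "(\<lambda>(e,q). q @ [e]) ` (SIGMA e:F. PS l l'' (bs B (Suc l'') e)) = PS l (Suc l'') w"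
    proof
      show "(\<lambda>(e,q). q @ [e]) ` (SIGMA e:F. PS l l'' (bs B (Suc l'') e)) \<subseteq> PS l (Suc l'') w"
        unfolding PS_def F_def using fpath_snoc[OF ll] by auto
      show "PS l (Suc l'') w \<subseteq> (\<lambda>(e,q). q @ [e]) ` (SIGMA e:F. PS l l'' (bs B (Suc l'') e))"
      proof
        fix q assume "q \<in> PS l (Suc l'') w"
        then obtain q' e where "q = q' @ [e]" "fpath B l l'' q'" "e \<in> bE B (Suc l'')"
          "br B l'' (last q') = bs B (Suc l'') e" "br B (Suc l'') e = w"
          unfolding PS_def using fpath_snoc[OF ll] by auto
        then show "q \<in> (\<lambda>(e,q). q @ [e]) ` (SIGMA e:F. PS l l'' (bs B (Suc l'') e))"
          unfolding PS_def F_def by (auto intro!: image_eqI[of _ _ "(e,q')"])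
      qed
    qed
    finally show ?thesis .
  qed
qed

lemma push_dl_card:
  assumes "l < l'" "w \<in> bV B l'"
  shows "push B l l' (dl u) w = int (card {q\<in>PS l l' w. bs B (Suc l) (hd q) = u})"
  unfolding push_paths[OF assms] dl_def
  by (simp add: sum.inter_filter[OF PS_fin, symmetric])

end

locale pbrat = brat + fixes p assumes p_tel: "is_telescoping_seq p"
  and p_pos: "positive_incidence (telescope B p)"
begin

lemma p0: "p 0 = 0" and p_mono: "strict_mono p"
  using p_tel unfolding is_telescoping_seq_def by auto

lemma p_less: "a < b \<Longrightarrow> p a < p b" using p_mono by (simp add: strict_mono_less)

lemma p_ge: "a \<le> p a" using p_mono by (simp add: strict_mono_imp_increasing)

lemma push_dl_step:
  assumes "u \<in> bV B (p a)" "w \<in> bV B (p (Suc a))"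
  shows "push B (p a) (p (Suc a)) (dl u) w \<ge> 1"
proof -
  have pi: "\<forall>k. \<forall>v\<in>bV B (p k). \<forall>w\<in>bV B (p (Suc k)). \<exists>e. fpath B (p k) (p (Suc k)) e \<and>
       bs B (Suc (p k)) (hd e) = v \<and> br B (p (Suc k)) (last e) = w"
    using p_pos unfolding positive_incidence_def telescope_def by simp
  obtain q where q: "fpath B (p a) (p (Suc a)) q" "bs B (Suc (p a)) (hd q) = u"
    "br B (p (Suc a)) (last q) = w"
    using pi assms by blast
  then have "q \<in> {q\<in>PS (p a) (p (Suc a)) w. bs B (Suc (p a)) (hd q) = u}"
    by (auto simp: PS_def)
  then have "card {q\<in>PS (p a) (p (Suc a)) w. bs B (Suc (p a)) (hd q) = u} \<ge> 1"
    using PS_fin by (metis (no_types, lifting) One_nat_def Suc_leI card_gt_0_iff empty_iff finite_subset mem_Collect_eq subsetI)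
  then show ?thesis using push_dl_card[of "p a" "p (Suc a)" w u] assms p_less by simp
qed

lemma dl_nonneg: "0 \<le> dl u v" unfolding dl_def by simp

lemma push_dl_pos:
  assumes "a < b" "u \<in> bV B (p a)" "w \<in> bV B (p b)"
  shows "push B (p a) (p b) (dl u) w \<ge> 1"
  using assms
proof (induction b arbitrary: w)
  case 0 then show ?case by simp
next
  case (Suc b)
  show ?case
  proof (cases "a = b")
    case True then show ?thesis using push_dl_step Suc by simp
  next
    case False
    then have ab: "a < b" using Suc by simp
    obtain y where y: "y \<in> bV B (p b)" using V_ne by blast
    have "1 \<le> push B (p b) (p (Suc b)) (dl y) w" using push_dl_step y Suc by simp
    also have "\<dots> \<le> push B (p b) (p (Suc b)) (push B (p a) (p b) (dl u)) w"
    proof (rule push_mono)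
      show "p b \<le> p (Suc b)" using p_less by (simp add: less_imp_le)
      show "w \<in> bV B (p (Suc b))" using Suc by simp
      show "\<forall>v\<in>bV B (p b). dl y v \<le> push B (p a) (p b) (dl u) v"
      proof
        fix v assume v: "v \<in> bV B (p b)"
        show "dl y v \<le> push B (p a) (p b) (dl u) v"
        proof (cases "v = y")
          case True then show ?thesis using Suc.IH[OF ab Suc.prems(2)] v by (simp add: dl_def)
        next
          case False
          then show ?thesis using push_nonneg[of "p a" "p b" "dl u" v] v ab p_less dl_nonneg
            by (simp add: dl_def less_imp_le)
        qed
      qed
    qed
    also have "\<dots> = push B (p a) (p (Suc b)) (dl u) w"
      using ab p_less Suc by (intro push_comp[symmetric]) (auto simp: less_imp_le)
    finally show ?thesis .
  qed
qed

lemma V0: "\<exists>v0. bV B 0 = {v0}" using brat unfolding bratteli_def by auto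

lemma H0: "v \<in> bV B 0 \<Longrightarrow> H 0 v = 1" unfolding H_def by simp

lemma H_pos: assumes "w \<in> bV B (p a)" shows "H (p a) w \<ge> 1"
proof (cases a)
  case 0 then show ?thesis using assms p0 H0 by simp
next
  case (Suc a')
  obtain v0 where v0: "bV B 0 = {v0}" using V0 by blast
  have "1 \<le> push B (p 0) (p a) (dl v0) w" using push_dl_pos[of 0 a v0 w] assms v0 Suc p0 by simp
  also have "\<dots> \<le> H (p a) w" unfolding H_def p0
    using assms v0 by (intro push_mono) (auto simp: dl_def)
  finally show ?thesis .
qed

lemma gcd_p:
  assumes hyp: "rational_subgroup B = int_multiples_of_unit B"
  shows "Gcd (H l ` bV B l) = 1"
proof (rule gcd_one[OF hyp], intro allI)
  fix m
  obtain w where "w \<in> bV B (p m)" using V_ne by blast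
  then show "\<exists>m'\<ge>m. \<exists>w\<in>bV B m'. H m' w \<noteq> 0" using H_pos[of w m] p_ge[of m] by force
qed

end

locale lord =
  fixes D :: "('a,'b) bdiag" and L :: "nat \<Rightarrow> 'a \<Rightarrow> 'b list" and c :: "nat \<Rightarrow> 'a"
  assumes lbrat: "bratteli D"
  and lpos: "positive_incidence D"
  and L_set: "v \<in> bV D (Suc k) \<Longrightarrow> set (L (Suc k) v) = fibre D (Suc k) v"
  and L_dist: "v \<in> bV D (Suc k) \<Longrightarrow> distinct (L (Suc k) v)"
  and c_in: "c k \<in> bV D k"
  and L_ne: "v \<in> bV D (Suc k) \<Longrightarrow> L (Suc k) v \<noteq> []"
  and L_hd: "v \<in> bV D (Suc k) \<Longrightarrow> bs D (Suc k) (hd (L (Suc k) v)) = c k"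
  and L_last: "v \<in> bV D (Suc k) \<Longrightarrow> bs D (Suc k) (last (L (Suc k) v)) = c k"
begin

lemma DE_bs: "e \<in> bE D (Suc k) \<Longrightarrow> bs D (Suc k) e \<in> bV D k"
  and DE_br: "e \<in> bE D (Suc k) \<Longrightarrow> br D (Suc k) e \<in> bV D (Suc k)"
  using lbrat unfolding bratteli_def by auto

definition om :: "nat \<Rightarrow> 'b rel" where
  "om k = {(e, e'). \<exists>v\<in>bV D k. \<exists>i j. i \<le> j \<and> j < length (L k v) \<and> e = L k v ! i \<and> e' = L k v ! j}"

definition ix :: "nat \<Rightarrow> 'b \<Rightarrow> nat" where
  "ix k e = (THE i. i < length (L k (br D k e)) \<and> L k (br D k e) ! i = e)"

lemma in_L: "e \<in> bE D (Suc k) \<Longrightarrow> e \<in> set (L (Suc k) (br D (Suc k) e))"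
  using L_set[OF DE_br] unfolding fibre_def by auto

lemma ix_lt: assumes "e \<in> bE D (Suc k)"
  shows "ix (Suc k) e < length (L (Suc k) (br D (Suc k) e)) \<and> L (Suc k) (br D (Suc k) e) ! ix (Suc k) e = e"
proof -
  have "\<exists>!i. i < length (L (Suc k) (br D (Suc k) e)) \<and> L (Suc k) (br D (Suc k) e) ! i = e"
    using distinct_Ex1[OF L_dist[OF DE_br[OF assms]] in_L[OF assms]] .
  then show ?thesis unfolding ix_def by (rule theI')
qed

lemma nth_L: assumes "v \<in> bV D (Suc k)" "i < length (L (Suc k) v)"
  shows "L (Suc k) v ! i \<in> bE D (Suc k)" "br D (Suc k) (L (Suc k) v ! i) = v"
    "ix (Suc k) (L (Suc k) v ! i) = i"
proof -
  have "L (Suc k) v ! i \<in> fibre D (Suc k) v" using L_set[OF assms(1)] assms(2) nth_mem by blast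
  then show e: "L (Suc k) v ! i \<in> bE D (Suc k)" and r: "br D (Suc k) (L (Suc k) v ! i) = v"
    unfolding fibre_def by auto
  show "ix (Suc k) (L (Suc k) v ! i) = i"
    using ix_lt[OF e] r assms L_dist[OF assms(1)] by (metis nth_eq_iff_index_eq)
qed

lemma om_iff: assumes "e \<in> bE D (Suc k)" "e' \<in> bE D (Suc k)"
  shows "(e, e') \<in> om (Suc k) \<longleftrightarrow> br D (Suc k) e = br D (Suc k) e' \<and> ix (Suc k) e \<le> ix (Suc k) e'"
proof
  assume "(e, e') \<in> om (Suc k)"
  then obtain v i j where v: "v \<in> bV D (Suc k)" "i \<le> j" "j < length (L (Suc k) v)"
    "e = L (Suc k) v ! i" "e' = L (Suc k) v ! j" unfolding om_def by blast
  then show "br D (Suc k) e = br D (Suc k) e' \<and> ix (Suc k) e \<le> ix (Suc k) e'"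
    using nth_L[OF v(1)] by auto
next
  assume a: "br D (Suc k) e = br D (Suc k) e' \<and> ix (Suc k) e \<le> ix (Suc k) e'"
  then show "(e, e') \<in> om (Suc k)" unfolding om_def using ix_lt[OF assms(1)] ix_lt[OF assms(2)] DE_br[OF assms(1)]
    by force
qed

lemma fibre_E: "e \<in> fibre D k v \<Longrightarrow> e \<in> bE D k \<and> br D k e = v"
  unfolding fibre_def by auto

lemma ix_inj: assumes "e \<in> bE D (Suc k)" "e' \<in> bE D (Suc k)" "br D (Suc k) e = br D (Suc k) e'"
  "ix (Suc k) e = ix (Suc k) e'" shows "e = e'"
  using ix_lt[OF assms(1)] ix_lt[OF assms(2)] assms(3,4) by metis

lemma ordering: "ordering D om"
  unfolding ordering_def
proof (intro allI ballI)
  fix k v assume v: "v \<in> bV D (Suc k)"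
  let ?F = "fibre D (Suc k) v"
  let ?R = "om (Suc k) \<inter> ?F \<times> ?F"
  have R: "\<And>e e'. (e, e') \<in> ?R \<longleftrightarrow> e \<in> ?F \<and> e' \<in> ?F \<and> ix (Suc k) e \<le> ix (Suc k) e'"
    using om_iff fibre_E by blast
  have a1: "?R \<subseteq> ?F \<times> ?F" by blast
  have a2: "refl_on ?F ?R" unfolding refl_on_def using R by blast
  have a3: "trans ?R" unfolding trans_on_def using R by (meson le_trans)
  have a4: "antisym ?R" unfolding antisym_on_def
  proof (intro ballI impI)
    fix e e' assume "(e, e') \<in> ?R" "(e', e) \<in> ?R"
    then have "e \<in> ?F" "e' \<in> ?F" "ix (Suc k) e \<le> ix (Suc k) e'" "ix (Suc k) e' \<le> ix (Suc k) e"
      using R by blast+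
    then show "e = e'" using fibre_E ix_inj by (metis order_antisym)
  qed
  have a5: "total_on ?F ?R" unfolding total_on_def using R by (meson nat_le_linear)
  show "linear_order_on ?F ?R"
    unfolding linear_order_on_def partial_order_on_def preorder_on_def using a1 a2 a3 a4 a5 by blast
qed

lemma max_iff: assumes "e \<in> bE D (Suc k)"
  shows "is_max_edge D om (Suc k) e \<longleftrightarrow> Suc (ix (Suc k) e) = length (L (Suc k) (br D (Suc k) e))"
proof
  let ?v = "br D (Suc k) e" let ?L = "L (Suc k) ?v"
  have v: "?v \<in> bV D (Suc k)" using DE_br[OF assms] .
  assume m: "is_max_edge D om (Suc k) e"
  have ne: "?L \<noteq> []" using L_ne[OF v] .
  have l: "length ?L - 1 < length ?L" using ne by simp
  have "?L ! (length ?L - 1) \<in> fibre D (Suc k) ?v" using nth_L[OF v l] unfolding fibre_def by auto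
  then have "(?L ! (length ?L - 1), e) \<in> om (Suc k)" using m unfolding is_max_edge_def by blast
  then have "length ?L - 1 \<le> ix (Suc k) e" using om_iff nth_L[OF v l] assms by auto
  then show "Suc (ix (Suc k) e) = length ?L" using ix_lt[OF assms] by linarith
next
  assume a: "Suc (ix (Suc k) e) = length (L (Suc k) (br D (Suc k) e))"
  show "is_max_edge D om (Suc k) e" unfolding is_max_edge_def
  proof
    fix e' assume "e' \<in> fibre D (Suc k) (br D (Suc k) e)"
    then have e': "e' \<in> bE D (Suc k)" "br D (Suc k) e' = br D (Suc k) e" using fibre_E by auto
    then show "(e', e) \<in> om (Suc k)" using om_iff[OF e'(1) assms] ix_lt[OF e'(1)] a by auto
  qed
qed

lemma min_iff: assumes "e \<in> bE D (Suc k)"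
  shows "is_min_edge D om (Suc k) e \<longleftrightarrow> ix (Suc k) e = 0"
proof
  let ?v = "br D (Suc k) e" let ?L = "L (Suc k) ?v"
  have v: "?v \<in> bV D (Suc k)" using DE_br[OF assms] .
  assume m: "is_min_edge D om (Suc k) e"
  have l: "0 < length ?L" using L_ne[OF v] by simp
  have "?L ! 0 \<in> fibre D (Suc k) ?v" using nth_L[OF v l] unfolding fibre_def by auto
  then have "(e, ?L ! 0) \<in> om (Suc k)" using m unfolding is_min_edge_def by blast
  then show "ix (Suc k) e = 0" using om_iff nth_L[OF v l] assms by auto
next
  assume a: "ix (Suc k) e = 0"
  show "is_min_edge D om (Suc k) e" unfolding is_min_edge_def
  proof
    fix e' assume "e' \<in> fibre D (Suc k) (br D (Suc k) e)"
    then have e': "e' \<in> bE D (Suc k)" "br D (Suc k) e' = br D (Suc k) e" using fibre_E by auto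
    then show "(e, e') \<in> om (Suc k)" using om_iff[OF assms e'(1)] a by auto
  qed
qed

fun hh :: "nat \<Rightarrow> 'a \<Rightarrow> nat" where
  "hh 0 v = 1"
| "hh (Suc k) v = sum_list (map (\<lambda>e. hh k (bs D (Suc k) e)) (L (Suc k) v))"

lemma hh_pos: "v \<in> bV D k \<Longrightarrow> hh k v \<ge> 1"
proof (induction k arbitrary: v)
  case 0 then show ?case by simp
next
  case (Suc k)
  have ne: "L (Suc k) v \<noteq> []" using L_ne[OF Suc.prems] .
  have "hd (L (Suc k) v) \<in> bE D (Suc k)"
    using nth_L[OF Suc.prems, of 0] ne by (simp add: hd_conv_nth)
  then have "1 \<le> hh k (bs D (Suc k) (hd (L (Suc k) v)))" using Suc.IH DE_bs by blast
  also have "\<dots> \<le> hh (Suc k) v" using ne by (cases "L (Suc k) v") auto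
  finally show ?case .
qed

lemma hh_sum: "v \<in> bV D (Suc k) \<Longrightarrow> hh (Suc k) v = (\<Sum>e\<in>fibre D (Suc k) v. hh k (bs D (Suc k) e))"
  using sum.distinct_set_conv_list[OF L_dist, of v k "\<lambda>e. hh k (bs D (Suc k) e)"] L_set by simp

definition off :: "nat \<Rightarrow> 'b \<Rightarrow> nat" where
  "off k e = sum_list (map (\<lambda>e'. hh k (bs D (Suc k) e')) (take (ix (Suc k) e) (L (Suc k) (br D (Suc k) e))))"

definition pos :: "nat \<Rightarrow> (nat \<Rightarrow> 'b) \<Rightarrow> nat" where
  "pos k x = (\<Sum>i<k. off i (x i))"

definition vt :: "nat \<Rightarrow> (nat \<Rightarrow> 'b) \<Rightarrow> 'a" where
  "vt k x = bs D (Suc k) (x k)"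

definition rest :: "nat \<Rightarrow> 'b \<Rightarrow> nat" where
  "rest k e = sum_list (map (\<lambda>e'. hh k (bs D (Suc k) e')) (drop (Suc (ix (Suc k) e)) (L (Suc k) (br D (Suc k) e))))"

lemma pos_Suc: "pos (Suc k) x = pos k x + off k (x k)"
  unfolding pos_def by simp

lemma hh_split: assumes "e \<in> bE D (Suc k)"
  shows "hh (Suc k) (br D (Suc k) e) = off k e + hh k (bs D (Suc k) e) + rest k e"
proof -
  let ?L = "L (Suc k) (br D (Suc k) e)" let ?i = "ix (Suc k) e"
  have "?L = take ?i ?L @ ?L ! ?i # drop (Suc ?i) ?L"
    by (rule id_take_nth_drop) (use ix_lt[OF assms] in simp)
  then have "hh (Suc k) (br D (Suc k) e) = sum_list (map (\<lambda>e'. hh k (bs D (Suc k) e')) (take ?i ?L @ [?L ! ?i] @ drop (Suc ?i) ?L))"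
    by (metis append_Cons append_Nil hh.simps(2))
  then show ?thesis unfolding off_def rest_def using ix_lt[OF assms] by simp
qed

lemma rest0: assumes "e \<in> bE D (Suc k)"
  shows "rest k e = 0 \<longleftrightarrow> is_max_edge D om (Suc k) e"
proof -
  let ?L = "L (Suc k) (br D (Suc k) e)" let ?i = "ix (Suc k) e"
  have v: "br D (Suc k) e \<in> bV D (Suc k)" using DE_br[OF assms] .
  have pos: "\<forall>e'\<in>set (drop (Suc ?i) ?L). hh k (bs D (Suc k) e') \<ge> 1"
  proof
    fix e' assume "e' \<in> set (drop (Suc ?i) ?L)"
    then have "e' \<in> set ?L" by (meson in_set_dropD)
    then have "e' \<in> bE D (Suc k)" using L_set[OF v] fibre_E by blast
    then show "hh k (bs D (Suc k) e') \<ge> 1" using hh_pos DE_bs by blast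
  qed
  have "rest k e = 0 \<longleftrightarrow> drop (Suc ?i) ?L = []"
  proof
    assume r: "rest k e = 0"
    show "drop (Suc ?i) ?L = []"
    proof (rule ccontr)
      assume "drop (Suc ?i) ?L \<noteq> []"
      then obtain a as where "drop (Suc ?i) ?L = a # as" by (cases "drop (Suc ?i) ?L") auto
      then show False using r pos unfolding rest_def by auto
    qed
  qed (simp add: rest_def)
  also have "\<dots> \<longleftrightarrow> Suc ?i = length ?L" using ix_lt[OF assms] by auto
  finally show ?thesis using max_iff[OF assms] by simp
qed

lemma ps_E: "x \<in> path_space D \<Longrightarrow> x i \<in> bE D (Suc i)"
  and ps_c: "x \<in> path_space D \<Longrightarrow> br D (Suc i) (x i) = bs D (Suc (Suc i)) (x (Suc i))"
  unfolding path_space_def by auto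

lemma vt_V: "x \<in> path_space D \<Longrightarrow> vt k x \<in> bV D k"
  unfolding vt_def using ps_E DE_bs by blast

lemma pos_bound: assumes "x \<in> path_space D"
  shows "pos k x < hh k (vt k x) \<and> (Suc (pos k x) = hh k (vt k x) \<longleftrightarrow> (\<forall>i<k. is_max_edge D om (Suc i) (x i)))"
proof (induction k)
  case 0 then show ?case by (simp add: pos_def)
next
  case (Suc k)
  have e: "x k \<in> bE D (Suc k)" using ps_E[OF assms] .
  have vt: "vt (Suc k) x = br D (Suc k) (x k)" unfolding vt_def using ps_c[OF assms] by simp
  have sp: "hh (Suc k) (vt (Suc k) x) = off k (x k) + hh k (vt k x) + rest k (x k)"
    unfolding vt using hh_split[OF e] by (simp add: vt_def)
  have "pos (Suc k) x < hh (Suc k) (vt (Suc k) x)" using Suc sp pos_Suc by simp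
  moreover have "Suc (pos (Suc k) x) = hh (Suc k) (vt (Suc k) x) \<longleftrightarrow>
     Suc (pos k x) = hh k (vt k x) \<and> rest k (x k) = 0"
    using Suc sp pos_Suc by auto
  ultimately show ?case using Suc rest0[OF e] less_Suc_eq by auto
qed

lemma simple: "simple_bratteli D"
  unfolding simple_bratteli_def
proof (intro conjI exI)
  show "bratteli D" by (rule lbrat)
  show "is_telescoping_seq id" by (simp add: is_telescoping_seq_def strict_mono_def)
  show "positive_incidence (telescope D id)"
    unfolding positive_incidence_def telescope_def
  proof (intro allI ballI, simp)
    fix k v w assume "v \<in> bV D k" "w \<in> bV D (Suc k)"
    then obtain e where e: "e \<in> bE D (Suc k)" "bs D (Suc k) e = v" "br D (Suc k) e = w"
      using lpos unfolding positive_incidence_def by blast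
    have "fpath D k (Suc k) [e]" unfolding fpath_def using e by auto
    then show "\<exists>x. fpath D k (Suc k) x \<and> bs D (Suc k) (hd x) = v \<and> br D (Suc k) (last x) = w"
      using e by (intro exI[of _ "[e]"]) auto
  qed
qed

definition xmax :: "nat \<Rightarrow> 'b" where "xmax i = last (L (Suc i) (c (Suc i)))"
definition xmin :: "nat \<Rightarrow> 'b" where "xmin i = hd (L (Suc i) (c (Suc i)))"

lemma last_L: assumes "v \<in> bV D (Suc k)"
  shows "last (L (Suc k) v) \<in> bE D (Suc k)" "br D (Suc k) (last (L (Suc k) v)) = v"
    "ix (Suc k) (last (L (Suc k) v)) = length (L (Suc k) v) - 1"
  using nth_L[OF assms, of "length (L (Suc k) v) - 1"] L_ne[OF assms] by (auto simp: last_conv_nth)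

lemma hd_L: assumes "v \<in> bV D (Suc k)"
  shows "hd (L (Suc k) v) \<in> bE D (Suc k)" "br D (Suc k) (hd (L (Suc k) v)) = v"
    "ix (Suc k) (hd (L (Suc k) v)) = 0"
  using nth_L[OF assms, of 0] L_ne[OF assms] by (auto simp: hd_conv_nth)

lemma xmax_path: "max_path D om xmax"
  unfolding max_path_def path_space_def mem_Collect_eq
proof (intro conjI allI)
  fix i
  show "xmax i \<in> bE D (Suc i)" unfolding xmax_def using last_L c_in by blast
  show "br D (Suc i) (xmax i) = bs D (Suc (Suc i)) (xmax (Suc i))"
    unfolding xmax_def using last_L(2) L_last c_in by metis
  show "is_max_edge D om (Suc i) (xmax i)"
    unfolding xmax_def using max_iff last_L c_in L_ne
    by (metis Suc_pred' length_greater_0_conv)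
qed

lemma max_unique: assumes "max_path D om x" shows "x = xmax"
proof
  fix i
  have ps: "x \<in> path_space D" using assms unfolding max_path_def by auto
  have mx: "\<And>j. is_max_edge D om (Suc j) (x j)" using assms unfolding max_path_def by auto
  have eq_last: "\<And>j. x j = last (L (Suc j) (br D (Suc j) (x j)))"
  proof -
    fix j
    have e: "x j \<in> bE D (Suc j)" using ps_E[OF ps] .
    have "Suc (ix (Suc j) (x j)) = length (L (Suc j) (br D (Suc j) (x j)))" using mx max_iff e by blast
    then show "x j = last (L (Suc j) (br D (Suc j) (x j)))"
      using ix_lt[OF e] by (metis diff_Suc_1 last_conv_nth list.size(3) nat.distinct(1))
  qed
  have "bs D (Suc (Suc i)) (x (Suc i)) = c (Suc i)"
    using eq_last[of "Suc i"] L_last DE_br ps_E[OF ps] by metis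
  then have "br D (Suc i) (x i) = c (Suc i)" using ps_c[OF ps] by simp
  then show "x i = xmax i" unfolding xmax_def using eq_last[of i] by simp
qed

lemma xmin_path: "min_path D om xmin"
  unfolding min_path_def path_space_def mem_Collect_eq
proof (intro conjI allI)
  fix i
  show "xmin i \<in> bE D (Suc i)" unfolding xmin_def using hd_L c_in by blast
  show "br D (Suc i) (xmin i) = bs D (Suc (Suc i)) (xmin (Suc i))"
    unfolding xmin_def using hd_L(2) L_hd c_in by metis
  show "is_min_edge D om (Suc i) (xmin i)"
    unfolding xmin_def using min_iff hd_L c_in by metis
qed

lemma min_unique: assumes "min_path D om x" shows "x = xmin"
proof
  fix i
  have ps: "x \<in> path_space D" using assms unfolding min_path_def by auto
  have mx: "\<And>j. is_min_edge D om (Suc j) (x j)" using assms unfolding min_path_def by auto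
  have eq_hd: "\<And>j. x j = hd (L (Suc j) (br D (Suc j) (x j)))"
  proof -
    fix j
    have e: "x j \<in> bE D (Suc j)" using ps_E[OF ps] .
    have "ix (Suc j) (x j) = 0" using mx min_iff e by blast
    then show "x j = hd (L (Suc j) (br D (Suc j) (x j)))"
      using ix_lt[OF e] by (metis hd_conv_nth less_zeroE list.size(3))
  qed
  have "bs D (Suc (Suc i)) (x (Suc i)) = c (Suc i)"
    using eq_hd[of "Suc i"] L_hd DE_br ps_E[OF ps] by metis
  then have "br D (Suc i) (x i) = c (Suc i)" using ps_c[OF ps] by simp
  then show "x i = xmin i" unfolding xmin_def using eq_hd[of i] by simp
qed

lemma proper: "proper_ordering D om"
  unfolding proper_ordering_def
  using simple ordering xmax_path max_unique xmin_path min_unique by blast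

end

context lord begin

lemma min_edge_eq: assumes v: "v \<in> bV D (Suc k)"
  shows "min_edge_into D om (Suc k) v = hd (L (Suc k) v)"
  unfolding min_edge_into_def
proof (rule the_equality)
  have h: "hd (L (Suc k) v) \<in> bE D (Suc k)" "br D (Suc k) (hd (L (Suc k) v)) = v"
    "ix (Suc k) (hd (L (Suc k) v)) = 0" using hd_L[OF v] by auto
  have hf: "hd (L (Suc k) v) \<in> fibre D (Suc k) v" unfolding fibre_def using h(1,2) by simp
  show "hd (L (Suc k) v) \<in> fibre D (Suc k) v \<and> (\<forall>e'\<in>fibre D (Suc k) v. (hd (L (Suc k) v), e') \<in> om (Suc k))"
  proof (intro conjI ballI)
    show "hd (L (Suc k) v) \<in> fibre D (Suc k) v" by (rule hf)
    fix e' assume "e' \<in> fibre D (Suc k) v"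
    then have e': "e' \<in> bE D (Suc k)" "br D (Suc k) e' = v" using fibre_E by auto
    show "(hd (L (Suc k) v), e') \<in> om (Suc k)" using om_iff[OF h(1) e'(1)] h e' by simp
  qed
  fix e assume a: "e \<in> fibre D (Suc k) v \<and> (\<forall>e'\<in>fibre D (Suc k) v. (e, e') \<in> om (Suc k))"
  then have eE: "e \<in> bE D (Suc k)" "br D (Suc k) e = v" using fibre_E by auto
  have "(e, hd (L (Suc k) v)) \<in> om (Suc k)" using a hf by blast
  then have "ix (Suc k) e = 0" using om_iff[OF eE(1) h(1)] h by simp
  then show "e = hd (L (Suc k) v)" using ix_inj[OF eE(1) h(1)] h eE by simp
qed

lemma succ_eq: assumes e: "e \<in> bE D (Suc k)" and si: "Suc (ix (Suc k) e) < length (L (Suc k) (br D (Suc k) e))"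
  shows "succ_edge D om (Suc k) e = L (Suc k) (br D (Suc k) e) ! Suc (ix (Suc k) e)"
  unfolding succ_edge_def
proof (rule the_equality)
  let ?v = "br D (Suc k) e" let ?f = "L (Suc k) ?v ! Suc (ix (Suc k) e)"
  have v: "?v \<in> bV D (Suc k)" using DE_br[OF e] .
  have f: "?f \<in> bE D (Suc k)" "br D (Suc k) ?f = ?v" "ix (Suc k) ?f = Suc (ix (Suc k) e)"
    using nth_L[OF v si] by auto
  have fe: "?f \<noteq> e" using f by auto
  have ff: "?f \<in> fibre D (Suc k) ?v" using f unfolding fibre_def by auto
  have efo: "(e, ?f) \<in> om (Suc k)" using om_iff[OF e f(1)] f by simp
  show "?f \<in> fibre D (Suc k) ?v \<and> ?f \<noteq> e \<and> (e, ?f) \<in> om (Suc k) \<and>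
    (\<forall>g\<in>fibre D (Suc k) ?v. g \<noteq> e \<and> (e, g) \<in> om (Suc k) \<longrightarrow> (?f, g) \<in> om (Suc k))"
  proof (intro conjI ballI impI)
    show "?f \<in> fibre D (Suc k) ?v" by (rule ff)
    show "?f \<noteq> e" by (rule fe)
    show "(e, ?f) \<in> om (Suc k)" by (rule efo)
    fix g assume g: "g \<in> fibre D (Suc k) ?v" and h: "g \<noteq> e \<and> (e, g) \<in> om (Suc k)"
    have gE: "g \<in> bE D (Suc k)" "br D (Suc k) g = ?v" using fibre_E[OF g] by auto
    have "ix (Suc k) e \<le> ix (Suc k) g" using om_iff[OF e gE(1)] h by simp
    moreover have "ix (Suc k) e \<noteq> ix (Suc k) g" using ix_inj[OF e gE(1)] gE h by auto
    ultimately have "ix (Suc k) e < ix (Suc k) g" by simp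
    then show "(?f, g) \<in> om (Suc k)" using om_iff[OF f(1) gE(1)] f gE by simp
  qed
  fix f' assume a: "f' \<in> fibre D (Suc k) ?v \<and> f' \<noteq> e \<and> (e, f') \<in> om (Suc k) \<and>
    (\<forall>g\<in>fibre D (Suc k) ?v. g \<noteq> e \<and> (e, g) \<in> om (Suc k) \<longrightarrow> (f', g) \<in> om (Suc k))"
  have f'E: "f' \<in> bE D (Suc k)" "br D (Suc k) f' = ?v" using fibre_E a by auto
  have "(f', ?f) \<in> om (Suc k)" using a ff fe efo by blast
  then have "ix (Suc k) f' \<le> Suc (ix (Suc k) e)" using om_iff[OF f'E(1) f(1)] f by simp
  moreover have "ix (Suc k) e \<le> ix (Suc k) f'" using om_iff[OF e f'E(1)] a by simp
  moreover have "ix (Suc k) e \<noteq> ix (Suc k) f'" using ix_inj[OF e f'E(1)] f'E a by auto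
  ultimately have "ix (Suc k) f' = ix (Suc k) ?f" using f by simp
  then show "f' = ?f" using ix_inj[OF f'E(1) f(1)] f'E f by simp
qed

lemma mfp: assumes "w \<in> bV D j"
  shows "length (min_fpath D om j w) = j \<and> (\<forall>i<j. min_fpath D om j w ! i \<in> bE D (Suc i) \<and>
     ix (Suc i) (min_fpath D om j w ! i) = 0 \<and>
     br D (Suc i) (min_fpath D om j w ! i) =
       (if Suc i = j then w else bs D (Suc (Suc i)) (min_fpath D om j w ! Suc i)))"
  using assms
proof (induction j arbitrary: w)
  case 0 then show ?case by simp
next
  case (Suc j)
  define e where "e = min_edge_into D om (Suc j) w"
  have e: "e = hd (L (Suc j) w)" unfolding e_def using min_edge_eq Suc.prems by blast
  have eE: "e \<in> bE D (Suc j)" "br D (Suc j) e = w" "ix (Suc j) e = 0" using hd_L[OF Suc.prems] e by auto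
  have bsV: "bs D (Suc j) e \<in> bV D j" using DE_bs[OF eE(1)] .
  define q where "q = min_fpath D om j (bs D (Suc j) e)"
  have mf: "min_fpath D om (Suc j) w = q @ [e]" unfolding q_def e_def by (simp add: Let_def)
  have IH: "length q = j \<and> (\<forall>i<j. q ! i \<in> bE D (Suc i) \<and> ix (Suc i) (q ! i) = 0 \<and>
     br D (Suc i) (q ! i) = (if Suc i = j then bs D (Suc j) e else bs D (Suc (Suc i)) (q ! Suc i)))"
    using Suc.IH[OF bsV] unfolding q_def .
  show ?case unfolding mf
  proof (intro conjI allI impI)
    show "length (q @ [e]) = Suc j" using IH by simp
    fix i assume i: "i < Suc j"
    show "(q @ [e]) ! i \<in> bE D (Suc i)"
      using IH eE i by (cases "i < j") (auto simp: nth_append less_Suc_eq)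
    show "ix (Suc i) ((q @ [e]) ! i) = 0"
      using IH eE i by (cases "i < j") (auto simp: nth_append less_Suc_eq)
    show "br D (Suc i) ((q @ [e]) ! i) = (if Suc i = Suc j then w else bs D (Suc (Suc i)) ((q @ [e]) ! Suc i))"
    proof (cases "i < j")
      case True
      then show ?thesis using IH by (cases "Suc i = j") (auto simp: nth_append)
    next
      case False then have "i = j" using i by simp
      then show ?thesis using IH eE by (simp add: nth_append)
    qed
  qed
qed

lemma pos_shift: "m \<le> k \<Longrightarrow> (\<forall>i. m \<le> i \<longrightarrow> y i = x i) \<Longrightarrow> pos k y + pos m x = pos k x + pos m y"
proof (induction k)
  case 0 then show ?case by simp
next
  case (Suc k)
  show ?case
  proof (cases "m = Suc k")
    case True then show ?thesis by simp
  next
    case False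
    then have "m \<le> k" using Suc by simp
    then show ?thesis using Suc pos_Suc[of k y] pos_Suc[of k x] by simp
  qed
qed

lemma pos_prefix: "(\<forall>i<k. y i = x i) \<Longrightarrow> pos k y = pos k x"
  unfolding pos_def by simp

lemma step:
  assumes ps: "x \<in> path_space D" and lt: "Suc (pos k x) < hh k (vt k x)"
  shows "vershik D om x \<in> path_space D \<and> (\<forall>i\<ge>k. vershik D om x i = x i) \<and>
    pos k (vershik D om x) = Suc (pos k x)"
proof -
  have "\<not> (\<forall>i<k. is_max_edge D om (Suc i) (x i))" using pos_bound[OF ps, of k] lt by auto
  then obtain i0 where i0: "i0 < k" "\<not> is_max_edge D om (Suc i0) (x i0)" by blast
  define j where "j = (LEAST i. \<not> is_max_edge D om (Suc i) (x i))"
  have jk: "j < k" using Least_le[of "\<lambda>i. \<not> is_max_edge D om (Suc i) (x i)" i0] i0 unfolding j_def by simp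
  have jn: "\<not> is_max_edge D om (Suc j) (x j)" unfolding j_def by (rule LeastI[of _ i0]) (rule i0(2))
  have jm: "\<forall>i<j. is_max_edge D om (Suc i) (x i)" unfolding j_def using not_less_Least by blast
  have nmp: "\<not> max_path D om x" using jn unfolding max_path_def by auto
  define e where "e = x j"
  have eE: "e \<in> bE D (Suc j)" unfolding e_def using ps_E[OF ps] .
  define v where "v = br D (Suc j) e"
  have vV: "v \<in> bV D (Suc j)" unfolding v_def using DE_br[OF eE] .
  have si: "Suc (ix (Suc j) e) < length (L (Suc j) v)"
  proof -
    have "Suc (ix (Suc j) e) \<noteq> length (L (Suc j) v)" using max_iff[OF eE] jn unfolding e_def v_def by simp
    then show ?thesis using ix_lt[OF eE] unfolding v_def by linarith
  qed
  define f where "f = L (Suc j) v ! Suc (ix (Suc j) e)"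
  have f: "f \<in> bE D (Suc j)" "br D (Suc j) f = v" "ix (Suc j) f = Suc (ix (Suc j) e)"
    using nth_L[OF vV si] unfolding f_def by auto
  have sf: "succ_edge D om (Suc j) (x j) = f" using succ_eq[OF eE] si unfolding f_def v_def e_def by simp
  have fV: "bs D (Suc j) f \<in> bV D j" using DE_bs[OF f(1)] .
  define q where "q = min_fpath D om j (bs D (Suc j) f)"
  have qp: "length q = j \<and> (\<forall>i<j. q ! i \<in> bE D (Suc i) \<and> ix (Suc i) (q ! i) = 0 \<and>
     br D (Suc i) (q ! i) = (if Suc i = j then bs D (Suc j) f else bs D (Suc (Suc i)) (q ! Suc i)))"
    using mfp[OF fV] unfolding q_def .
  define y where "y = (\<lambda>i. if i < j then q ! i else if i = j then f else x i)"
  have ql: "length q = j" using qp by simp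
  have qi: "\<And>i. i < j \<Longrightarrow> q ! i \<in> bE D (Suc i) \<and> ix (Suc i) (q ! i) = 0 \<and>
     br D (Suc i) (q ! i) = (if Suc i = j then bs D (Suc j) f else bs D (Suc (Suc i)) (q ! Suc i))"
    using qp by blast
  have T: "vershik D om x = y"
    unfolding vershik_def Let_def j_def[symmetric] sf y_def q_def using nmp by simp
  have yE: "\<And>i. y i \<in> bE D (Suc i)"
  proof -
    fix i show "y i \<in> bE D (Suc i)"
    proof (cases "i < j")
      case True then show ?thesis using qi[OF True] by (simp add: y_def)
    next
      case False then show ?thesis using f(1) ps_E[OF ps, of i] by (cases "i = j") (simp_all add: y_def)
    qed
  qed
  have yc: "\<And>i. br D (Suc i) (y i) = bs D (Suc (Suc i)) (y (Suc i))"
  proof -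
    fix i
    show "br D (Suc i) (y i) = bs D (Suc (Suc i)) (y (Suc i))"
    proof (cases "Suc i < j")
      case True
      then have "i < j" by simp
      then show ?thesis using qi[OF \<open>i < j\<close>] True by (simp add: y_def)
    next
      case False
      show ?thesis
      proof (cases "Suc i = j")
        case True
        then have "i < j" by simp
        then show ?thesis using qi[OF \<open>i < j\<close>] True by (simp add: y_def)
      next
        case False
        with \<open>\<not> Suc i < j\<close> have ji: "j \<le> i" by simp
        show ?thesis
        proof (cases "i = j")
          case True
          have "br D (Suc j) f = bs D (Suc (Suc j)) (x (Suc j))" using f(2) ps_c[OF ps, of j] unfolding v_def e_def by simp
          then show ?thesis using True by (simp add: y_def)
        next
          case False
          then have "y i = x i" "y (Suc i) = x (Suc i)" using ji by (simp_all add: y_def)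
          then show ?thesis using ps_c[OF ps, of i] by simp
        qed
      qed
    qed
  qed
  have yps: "y \<in> path_space D"
    unfolding path_space_def using yE yc by blast
  have tail: "\<forall>i\<ge>k. y i = x i" using jk unfolding y_def by auto
  have py0: "pos j y = 0" unfolding pos_def
    by (rule sum.neutral) (simp add: y_def off_def qi)
  have offf: "off j f = off j e + hh j (bs D (Suc j) e)"
  proof -
    have "take (Suc (ix (Suc j) e)) (L (Suc j) v) = take (ix (Suc j) e) (L (Suc j) v) @ [L (Suc j) v ! ix (Suc j) e]"
      using si by (simp add: take_Suc_conv_app_nth)
    moreover have "L (Suc j) v ! ix (Suc j) e = e" using ix_lt[OF eE] unfolding v_def by simp
    ultimately show ?thesis unfolding off_def using f unfolding v_def by simp
  qed
  have "Suc (pos j x) = hh j (vt j x)" using pos_bound[OF ps, of j] jm by simp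
  then have pxs: "Suc (pos (Suc j) x) = off j e + hh j (bs D (Suc j) e)"
    using pos_Suc[of j x] unfolding vt_def e_def by simp
  have pys: "pos (Suc j) y = Suc (pos (Suc j) x)"
    using pos_Suc[of j y] py0 offf pxs unfolding y_def by simp
  have "pos k y + pos (Suc j) x = pos k x + pos (Suc j) y"
    using jk unfolding y_def by (intro pos_shift) auto
  then have "pos k y = Suc (pos k x)" using pys by simp
  then show ?thesis using T yps tail by simp
qed

lemma iter:
  assumes ps: "x \<in> path_space D" and lt: "pos k x + n < hh k (vt k x)"
  shows "(vershik D om ^^ n) x \<in> path_space D \<and> (\<forall>i\<ge>k. (vershik D om ^^ n) x i = x i) \<and>
    pos k ((vershik D om ^^ n) x) = pos k x + n"
  using lt
proof (induction n)
  case 0 then show ?case using ps by simp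
next
  case (Suc n)
  let ?z = "(vershik D om ^^ n) x"
  have IH: "?z \<in> path_space D \<and> (\<forall>i\<ge>k. ?z i = x i) \<and> pos k ?z = pos k x + n" using Suc by simp
  have "vt k ?z = vt k x" using IH unfolding vt_def by simp
  then have "Suc (pos k ?z) < hh k (vt k ?z)" using IH Suc.prems by simp
  then show ?case using step[of ?z k] IH by simp
qed

lemma off_mono: assumes e: "e \<in> bE D (Suc k)" and e': "e' \<in> bE D (Suc k)"
  and r: "br D (Suc k) e = br D (Suc k) e'" and lt: "ix (Suc k) e < ix (Suc k) e'"
  shows "off k e + hh k (bs D (Suc k) e) \<le> off k e'"
proof -
  let ?L = "L (Suc k) (br D (Suc k) e)" let ?g = "\<lambda>e'. hh k (bs D (Suc k) e')"
  define R where "R = drop (Suc (ix (Suc k) e)) (take (ix (Suc k) e') ?L)"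
  have "take (ix (Suc k) e') ?L = take (Suc (ix (Suc k) e)) (take (ix (Suc k) e') ?L) @ drop (Suc (ix (Suc k) e)) (take (ix (Suc k) e') ?L)"
    by (rule append_take_drop_id[symmetric])
  moreover have "take (Suc (ix (Suc k) e)) (take (ix (Suc k) e') ?L) = take (Suc (ix (Suc k) e)) ?L"
    using lt by (simp add: min_def)
  ultimately have tk: "take (ix (Suc k) e') ?L = take (Suc (ix (Suc k) e)) ?L @ R"
    unfolding R_def by simp
  moreover have "take (Suc (ix (Suc k) e)) ?L = take (ix (Suc k) e) ?L @ [e]"
    using ix_lt[OF e] by (simp add: take_Suc_conv_app_nth)
  then have "sum_list (map ?g (take (ix (Suc k) e') ?L)) =
     sum_list (map ?g (take (ix (Suc k) e) ?L)) + ?g e + sum_list (map ?g R)"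
    using tk by simp
  then show ?thesis unfolding off_def using r by simp
qed

lemma inj_pos:
  assumes "x \<in> path_space D" "y \<in> path_space D" "\<forall>i\<ge>k. x i = y i" "pos k x = pos k y"
  shows "x = y"
  using assms(3,4)
proof (induction k)
  case 0 then show ?case by auto
next
  case (Suc k)
  have ex: "x k \<in> bE D (Suc k)" using ps_E[OF assms(1)] .
  have ey: "y k \<in> bE D (Suc k)" using ps_E[OF assms(2)] .
  have "x (Suc k) = y (Suc k)" using Suc.prems(1) by simp
  then have r: "br D (Suc k) (x k) = br D (Suc k) (y k)" using ps_c[OF assms(1), of k] ps_c[OF assms(2), of k] by simp
  have px: "pos k x < hh k (bs D (Suc k) (x k))" using pos_bound[OF assms(1)] unfolding vt_def by simp
  have py: "pos k y < hh k (bs D (Suc k) (y k))" using pos_bound[OF assms(2)] unfolding vt_def by simp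
  have eq: "pos k x + off k (x k) = pos k y + off k (y k)" using Suc.prems pos_Suc by simp
  have "ix (Suc k) (x k) = ix (Suc k) (y k)"
  proof (rule ccontr)
    assume "ix (Suc k) (x k) \<noteq> ix (Suc k) (y k)"
    then consider "ix (Suc k) (x k) < ix (Suc k) (y k)" | "ix (Suc k) (y k) < ix (Suc k) (x k)" by linarith
    then show False
    proof cases
      case 1 then show False using off_mono[OF ex ey r] eq px by linarith
    next
      case 2 then show False using off_mono[OF ey ex r[symmetric]] eq py by linarith
    qed
  qed
  then have xy: "x k = y k" using ix_inj[OF ex ey r] by simp
  then have "pos k x = pos k y" using eq by simp
  moreover have "\<forall>i\<ge>k. x i = y i"
  proof (intro allI impI)
    fix i assume "k \<le> i"
    then show "x i = y i" using Suc.prems xy by (cases "i = k") auto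
  qed
  ultimately show ?case using Suc.IH by simp
qed

end

context lord begin

lemma cyl_open:
  assumes "openin (path_topology D) U" "x \<in> U"
  shows "x \<in> path_space D \<and> (\<exists>N. \<forall>y\<in>path_space D. (\<forall>i<N. y i = x i) \<longrightarrow> y \<in> U)"
proof -
  have "generate_topology_on (range (cylinder D)) U"
    using assms(1) unfolding path_topology_def openin_topology_generated_by_iff .
  then show ?thesis using assms(2)
  proof (induction arbitrary: x rule: generate_topology_on.induct)
    case Empty then show ?case by simp
  next
    case (Int a b)
    obtain N1 where N1: "\<forall>y\<in>path_space D. (\<forall>i<N1. y i = x i) \<longrightarrow> y \<in> a" and ps: "x \<in> path_space D"
      using Int.IH(1)[of x] Int.prems by blast
    obtain N2 where N2: "\<forall>y\<in>path_space D. (\<forall>i<N2. y i = x i) \<longrightarrow> y \<in> b"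
      using Int.IH(2)[of x] Int.prems by blast
    have "\<forall>y\<in>path_space D. (\<forall>i<max N1 N2. y i = x i) \<longrightarrow> y \<in> a \<inter> b"
      using N1 N2 by simp
    then show ?case using ps by blast
  next
    case (UN K)
    then obtain k where "k \<in> K" "x \<in> k" by blast
    then show ?case using UN.IH[of k x] by blast
  next
    case (Basis s)
    then obtain p where s: "s = cylinder D p" by blast
    have "x \<in> path_space D" "\<forall>i<length p. x i = p ! i" using Basis.prems s unfolding cylinder_def by auto
    moreover have "\<forall>y\<in>path_space D. (\<forall>i<length p. y i = x i) \<longrightarrow> y \<in> s"
      using calculation(2) unfolding s cylinder_def by auto
    ultimately show ?case by blast
  qed
qed

definition gnext :: "'a \<Rightarrow> nat \<Rightarrow> 'b" where
  "gnext z m = (SOME g. g \<in> bE D (Suc (Suc m)) \<and> bs D (Suc (Suc m)) g = z \<and> br D (Suc (Suc m)) g = c (Suc (Suc m)))"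

lemma gnext: assumes "z \<in> bV D (Suc m)"
  shows "gnext z m \<in> bE D (Suc (Suc m)) \<and> bs D (Suc (Suc m)) (gnext z m) = z \<and> br D (Suc (Suc m)) (gnext z m) = c (Suc (Suc m))"
proof -
  have "\<exists>g. g \<in> bE D (Suc (Suc m)) \<and> bs D (Suc (Suc m)) g = z \<and> br D (Suc (Suc m)) g = c (Suc (Suc m))"
    using lpos assms c_in unfolding positive_incidence_def by blast
  then show ?thesis unfolding gnext_def by (rule someI_ex)
qed

definition glue :: "(nat \<Rightarrow> 'b) \<Rightarrow> 'b \<Rightarrow> nat \<Rightarrow> nat \<Rightarrow> 'b" where
  "glue x e m = (\<lambda>i. if i < m then x i else if i = m then e else if i = Suc m then gnext (br D (Suc m) e) m else xmax i)"

lemma xmax_ps: "xmax \<in> path_space D" using xmax_path unfolding max_path_def by auto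

lemma xmax_bs: "bs D (Suc (Suc j)) (xmax (Suc j)) = c (Suc j)"
  unfolding xmax_def using L_last c_in by blast

lemma glue:
  assumes ps: "x \<in> path_space D" and e: "e \<in> bE D (Suc m)" and ev: "bs D (Suc m) e = vt m x"
  shows "glue x e m \<in> path_space D" "\<forall>i<m. glue x e m i = x i" "glue x e m m = e"
    "pos (Suc m) (glue x e m) = pos m x + off m e" "vt (Suc m) (glue x e m) = br D (Suc m) e"
proof -
  let ?y = "glue x e m"
  have z: "br D (Suc m) e \<in> bV D (Suc m)" using DE_br[OF e] .
  note g = gnext[OF z]
  have yE: "\<And>i. ?y i \<in> bE D (Suc i)"
  proof -
    fix i show "?y i \<in> bE D (Suc i)"
      using ps_E[OF ps, of i] e g ps_E[OF xmax_ps, of i] unfolding glue_def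
      by (cases "i < m"; cases "i = m"; cases "i = Suc m") auto
  qed
  have yc: "\<And>i. br D (Suc i) (?y i) = bs D (Suc (Suc i)) (?y (Suc i))"
  proof -
    fix i
    consider "Suc i < m" | "Suc i = m" | "i = m" | "i = Suc m" | "Suc m < i" by linarith
    then show "br D (Suc i) (?y i) = bs D (Suc (Suc i)) (?y (Suc i))"
    proof cases
      case 1 then show ?thesis using ps_c[OF ps, of i] unfolding glue_def by simp
    next
      case 2 then show ?thesis using ps_c[OF ps, of i] ev unfolding glue_def vt_def by auto
    next
      case 3 then show ?thesis using g unfolding glue_def by simp
    next
      case 4 then show ?thesis using g xmax_bs[of "Suc m"] unfolding glue_def by simp
    next
      case 5 then show ?thesis using ps_c[OF xmax_ps, of i] unfolding glue_def by simp
    qed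
  qed
  show "?y \<in> path_space D" unfolding path_space_def using yE yc by blast
  show "\<forall>i<m. ?y i = x i" unfolding glue_def by simp
  show "?y m = e" unfolding glue_def by simp
  show "pos (Suc m) ?y = pos m x + off m e"
    using pos_Suc[of m ?y] pos_prefix[of m ?y x] unfolding glue_def by simp
  show "vt (Suc m) ?y = br D (Suc m) e" using g unfolding vt_def glue_def by simp
qed

lemma glue_tail: "i > m \<Longrightarrow> br D (Suc m) e = br D (Suc m) e' \<Longrightarrow> glue x e m i = glue x' e' m i"
  unfolding glue_def by simp

lemma funpow_pair0: fixes T :: "'c \<Rightarrow> 'c" and p :: "'c \<times> 'c"
  shows "((\<lambda>(x, y). (T x, T y)) ^^ n) p = ((T ^^ n) (fst p), (T ^^ n) (snd p))"
  by (induction n arbitrary: p) (auto simp: case_prod_beta)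

lemma funpow_pair: fixes T :: "'c \<Rightarrow> 'c"
  shows "((\<lambda>(x, y). (T x, T y)) ^^ n) = (\<lambda>(x, y). ((T ^^ n) x, (T ^^ n) y))"
  using funpow_pair0 by (auto simp: fun_eq_iff)

lemma wm:
  assumes pat: "\<And>m. \<exists>Dm Hm z. (\<forall>v\<in>bV D m. hh m v \<le> Hm) \<and> z \<in> bV D (Suc m) \<and>
     (\<forall>v\<in>bV D m. \<forall>w\<in>bV D m. \<forall>d. Dm \<le> d \<and> d \<le> Dm + 4 * Hm \<longrightarrow>
        (\<exists>e e'. e \<in> fibre D (Suc m) z \<and> e' \<in> fibre D (Suc m) z \<and> bs D (Suc m) e = v \<and>
           bs D (Suc m) e' = w \<and> off m e' = off m e + d))"
  shows "weakly_mixing (path_topology D) (vershik D om)"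
  unfolding weakly_mixing_def top_transitive_def
proof (intro allI impI)
  let ?X = "path_topology D" let ?T = "vershik D om"
  fix U W assume a: "openin (prod_topology ?X ?X) U \<and> openin (prod_topology ?X ?X) W \<and> U \<noteq> {} \<and> W \<noteq> {}"
  obtain a1 a2 where aU: "(a1, a2) \<in> U" using a by auto
  obtain b1 b2 where bW: "(b1, b2) \<in> W" using a by auto
  have oU: "openin (prod_topology ?X ?X) U" and oW: "openin (prod_topology ?X ?X) W" using a by blast+
  from oU[unfolded openin_prod_topology_alt, rule_format, OF aU]
  obtain U1 U2 where U: "openin ?X U1" "openin ?X U2" "a1 \<in> U1" "a2 \<in> U2" "U1 \<times> U2 \<subseteq> U"
    by blast
  from oW[unfolded openin_prod_topology_alt, rule_format, OF bW]
  obtain W1 W2 where W: "openin ?X W1" "openin ?X W2" "b1 \<in> W1" "b2 \<in> W2" "W1 \<times> W2 \<subseteq> W"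
    by blast
  obtain N1 where N1: "\<forall>y\<in>path_space D. (\<forall>i<N1. y i = a1 i) \<longrightarrow> y \<in> U1" and a1: "a1 \<in> path_space D"
    using cyl_open[OF U(1) U(3)] by blast
  obtain N2 where N2: "\<forall>y\<in>path_space D. (\<forall>i<N2. y i = a2 i) \<longrightarrow> y \<in> U2" and a2: "a2 \<in> path_space D"
    using cyl_open[OF U(2) U(4)] by blast
  obtain N3 where N3: "\<forall>y\<in>path_space D. (\<forall>i<N3. y i = b1 i) \<longrightarrow> y \<in> W1" and b1: "b1 \<in> path_space D"
    using cyl_open[OF W(1) W(3)] by blast
  obtain N4 where N4: "\<forall>y\<in>path_space D. (\<forall>i<N4. y i = b2 i) \<longrightarrow> y \<in> W2" and b2: "b2 \<in> path_space D"
    using cyl_open[OF W(2) W(4)] by blast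
  define m where "m = N1 + N2 + N3 + N4"
  obtain Dm Hm z where H: "\<forall>v\<in>bV D m. hh m v \<le> Hm" and z: "z \<in> bV D (Suc m)"
    and P: "\<forall>v\<in>bV D m. \<forall>w\<in>bV D m. \<forall>d. Dm \<le> d \<and> d \<le> Dm + 4 * Hm \<longrightarrow>
        (\<exists>e e'. e \<in> fibre D (Suc m) z \<and> e' \<in> fibre D (Suc m) z \<and> bs D (Suc m) e = v \<and>
           bs D (Suc m) e' = w \<and> off m e' = off m e + d)"
    using pat[of m] by blast
  define i1 where "i1 = pos m a1"
  define i2 where "i2 = pos m a2"
  define j1 where "j1 = pos m b1"
  define j2 where "j2 = pos m b2"
  have i1: "i1 < Hm"
  proof -
    have "hh m (vt m a1) \<le> Hm" using H vt_V[OF a1, of m] by blast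
    then show ?thesis using conjunct1[OF pos_bound[OF a1, of m]] unfolding i1_def by linarith
  qed
  have i2: "i2 < Hm"
  proof -
    have "hh m (vt m a2) \<le> Hm" using H vt_V[OF a2, of m] by blast
    then show ?thesis using conjunct1[OF pos_bound[OF a2, of m]] unfolding i2_def by linarith
  qed
  have j1: "j1 < Hm"
  proof -
    have "hh m (vt m b1) \<le> Hm" using H vt_V[OF b1, of m] by blast
    then show ?thesis using conjunct1[OF pos_bound[OF b1, of m]] unfolding j1_def by linarith
  qed
  have j2: "j2 < Hm"
  proof -
    have "hh m (vt m b2) \<le> Hm" using H vt_V[OF b2, of m] by blast
    then show ?thesis using conjunct1[OF pos_bound[OF b2, of m]] unfolding j2_def by linarith
  qed
  define d1 where "d1 = Dm + 2 * Hm"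
  define n where "n = d1 + j1 - i1"
  define d2 where "d2 = n + i2 - j2"
  have n0: "n > 0" unfolding n_def d1_def using i1 by linarith
  have d1r: "Dm \<le> d1 \<and> d1 \<le> Dm + 4 * Hm" unfolding d1_def by simp
  have d2r: "Dm \<le> d2 \<and> d2 \<le> Dm + 4 * Hm" unfolding d2_def n_def d1_def using i1 i2 j1 j2 by linarith
  from P[rule_format, OF vt_V[OF a1, of m] vt_V[OF b1, of m] d1r]
  obtain e1 e1' where E1: "e1 \<in> fibre D (Suc m) z" "e1' \<in> fibre D (Suc m) z" "bs D (Suc m) e1 = vt m a1"
    "bs D (Suc m) e1' = vt m b1" "off m e1' = off m e1 + d1"
    by blast
  from P[rule_format, OF vt_V[OF a2, of m] vt_V[OF b2, of m] d2r]
  obtain e2 e2' where E2: "e2 \<in> fibre D (Suc m) z" "e2' \<in> fibre D (Suc m) z" "bs D (Suc m) e2 = vt m a2"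
    "bs D (Suc m) e2' = vt m b2" "off m e2' = off m e2 + d2"
    by blast
  have key: "\<And>a b e e' i j d. a \<in> path_space D \<Longrightarrow> b \<in> path_space D \<Longrightarrow> e \<in> fibre D (Suc m) z \<Longrightarrow>
     e' \<in> fibre D (Suc m) z \<Longrightarrow> bs D (Suc m) e = vt m a \<Longrightarrow> bs D (Suc m) e' = vt m b \<Longrightarrow>
     off m e' = off m e + d \<Longrightarrow> i = pos m a \<Longrightarrow> j = pos m b \<Longrightarrow> d + j = n + i \<Longrightarrow>
     (?T ^^ n) (glue a e m) = glue b e' m"
  proof -
    fix a b e e' i j d
    assume ab: "a \<in> path_space D" "b \<in> path_space D" and ef: "e \<in> fibre D (Suc m) z" "e' \<in> fibre D (Suc m) z"
      and ee: "bs D (Suc m) e = vt m a" "bs D (Suc m) e' = vt m b" "off m e' = off m e + d"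
      and ij: "i = pos m a" "j = pos m b" "d + j = n + i"
    have eE: "e \<in> bE D (Suc m)" "br D (Suc m) e = z" using fibre_E[OF ef(1)] by auto
    have eE': "e' \<in> bE D (Suc m)" "br D (Suc m) e' = z" using fibre_E[OF ef(2)] by auto
    note ga = glue[OF ab(1) eE(1) ee(1)]
    note gb = glue[OF ab(2) eE'(1) ee(2)]
    have pb: "pos (Suc m) (glue b e' m) = pos (Suc m) (glue a e m) + n"
      using ga(4) gb(4) ee(3) ij by simp
    have "pos (Suc m) (glue b e' m) < hh (Suc m) (vt (Suc m) (glue b e' m))"
      using pos_bound[OF gb(1), of "Suc m"] by blast
    then have lt: "pos (Suc m) (glue a e m) + n < hh (Suc m) (vt (Suc m) (glue a e m))"
      using pb ga(5) gb(5) eE eE' by (simp del: hh.simps)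
    note it = iter[OF ga(1) lt]
    show "(?T ^^ n) (glue a e m) = glue b e' m"
    proof (rule inj_pos[of _ _ "Suc m"])
      show "(?T ^^ n) (glue a e m) \<in> path_space D" using it by simp
      show "glue b e' m \<in> path_space D" using gb(1) .
      show "\<forall>i\<ge>Suc m. (?T ^^ n) (glue a e m) i = glue b e' m i"
        using it glue_tail[where m=m and e=e and e'=e' and x=a and x'=b] eE eE' by simp
      show "pos (Suc m) ((?T ^^ n) (glue a e m)) = pos (Suc m) (glue b e' m)" using it pb by simp
    qed
  qed
  have T1: "(?T ^^ n) (glue a1 e1 m) = glue b1 e1' m"
    by (rule key[OF a1 b1 E1(1,2,3,4,5) i1_def j1_def]) (use i1 j1 in \<open>simp add: n_def d1_def\<close>)
  have T2: "(?T ^^ n) (glue a2 e2 m) = glue b2 e2' m"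
    by (rule key[OF a2 b2 E2(1,2,3,4,5) i2_def j2_def]) (use i1 i2 j1 j2 in \<open>simp add: d2_def n_def d1_def\<close>)
  have gin: "\<And>a e N Y. a \<in> path_space D \<Longrightarrow> e \<in> fibre D (Suc m) z \<Longrightarrow> bs D (Suc m) e = vt m a \<Longrightarrow> N \<le> m \<Longrightarrow>
      (\<forall>y\<in>path_space D. (\<forall>i<N. y i = a i) \<longrightarrow> y \<in> Y) \<Longrightarrow> glue a e m \<in> Y"
  proof -
    fix a e N Y assume a: "a \<in> path_space D" "e \<in> fibre D (Suc m) z" "bs D (Suc m) e = vt m a" "N \<le> m"
      "\<forall>y\<in>path_space D. (\<forall>i<N. y i = a i) \<longrightarrow> y \<in> Y"
    have eE: "e \<in> bE D (Suc m)" using fibre_E[OF a(2)] by auto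
    note ga = glue[OF a(1) eE a(3)]
    show "glue a e m \<in> Y" using a(4,5) ga(1,2) by auto
  qed
  have x1: "glue a1 e1 m \<in> U1" by (rule gin[OF a1 E1(1) E1(3) _ N1]) (simp add: m_def)
  have x2: "glue a2 e2 m \<in> U2" by (rule gin[OF a2 E2(1) E2(3) _ N2]) (simp add: m_def)
  have y1: "glue b1 e1' m \<in> W1" by (rule gin[OF b1 E1(2) E1(4) _ N3]) (simp add: m_def)
  have y2: "glue b2 e2' m \<in> W2" by (rule gin[OF b2 E2(2) E2(4) _ N4]) (simp add: m_def)
  have inU: "(glue a1 e1 m, glue a2 e2 m) \<in> U" using x1 x2 U(5) by blast
  have eqF: "((\<lambda>(x, y). (?T x, ?T y)) ^^ n) (glue a1 e1 m, glue a2 e2 m) = (glue b1 e1' m, glue b2 e2' m)"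
    unfolding funpow_pair using T1 T2 by simp
  have inW: "(glue b1 e1' m, glue b2 e2' m) \<in> W" using y1 y2 W(5) by blast
  have "(glue b1 e1' m, glue b2 e2' m) \<in> ((\<lambda>(x, y). (?T x, ?T y)) ^^ n) ` U"
    by (rule image_eqI[where f="((\<lambda>(x, y). (?T x, ?T y)) ^^ n)", OF eqF[symmetric] inU])
  then have "(glue b1 e1' m, glue b2 e2' m) \<in> ((\<lambda>(x, y). (?T x, ?T y)) ^^ n) ` U \<inter> W"
    using inW by (rule IntI)
  then have "((\<lambda>(x, y). (?T x, ?T y)) ^^ n) ` U \<inter> W \<noteq> {}" by blast
  then show "\<exists>n>0. ((\<lambda>(x, y). (?T x, ?T y)) ^^ n) ` U \<inter> W \<noteq> {}" using n0 by blast
qed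

end

lemma bezout_set:
  fixes h :: "'a \<Rightarrow> int"
  assumes "finite V"
  shows "\<exists>a. (\<Sum>u\<in>V. a u * h u) = Gcd (h ` V)"
  using assms
proof (induction V rule: finite_induct)
  case empty then show ?case by simp
next
  case (insert x F)
  then obtain a where a: "(\<Sum>u\<in>F. a u * h u) = Gcd (h ` F)" by blast
  obtain s t where st: "s * h x + t * Gcd (h ` F) = gcd (h x) (Gcd (h ` F))" using bezout_int by blast
  define a' where "a' = (\<lambda>y. if y = x then s else t * a y)"
  have "(\<Sum>u\<in>insert x F. a' u * h u) = s * h x + (\<Sum>u\<in>F. t * (a u * h u))"
  proof -
    have "(\<Sum>u\<in>insert x F. a' u * h u) = a' x * h x + (\<Sum>u\<in>F. a' u * h u)" using insert by simp
    moreover have "(\<Sum>u\<in>F. a' u * h u) = (\<Sum>u\<in>F. t * (a u * h u))"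
      using insert(2) by (intro sum.cong) (auto simp: a'_def mult.assoc)
    moreover have "a' x = s" by (simp add: a'_def)
    ultimately show ?thesis by simp
  qed
  also have "\<dots> = s * h x + t * Gcd (h ` F)" by (simp add: sum_distrib_left[symmetric] a)
  also have "\<dots> = Gcd (h ` insert x F)" using st by simp
  finally show ?case by blast
qed

lemma frobenius_int:
  fixes h :: "'a \<Rightarrow> int"
  assumes fin: "finite V" and u1: "u1 \<in> V" and hp: "\<forall>u\<in>V. h u \<ge> 1" and g: "Gcd (h ` V) = 1"
  shows "\<exists>F. \<forall>N\<ge>F. \<exists>\<kappa>. (\<forall>u. \<kappa> u \<ge> 0) \<and> (\<Sum>u\<in>V. \<kappa> u * h u) = N"
proof -
  obtain a where a: "(\<Sum>u\<in>V. a u * h u) = 1" using bezout_set[OF fin, of h] g by auto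
  define h1 where "h1 = h u1"
  have h1: "h1 \<ge> 1" using hp u1 unfolding h1_def by auto
  define S where "S = (\<Sum>u\<in>V - {u1}. \<bar>a u\<bar> * h u)"
  define Q where "Q = \<bar>a u1\<bar> * h1 + S"
  have aa: "a u1 * h1 + (\<Sum>u\<in>V - {u1}. a u * h u) = 1"
    using a sum.remove[OF fin u1, of "\<lambda>u. a u * h u"] unfolding h1_def by simp
  show ?thesis
  proof (rule exI[of _ "(Q + 1) * h1"], intro allI impI)
    fix N assume N: "(Q + 1) * h1 \<le> N"
    define q where "q = N div h1"
    define t where "t = N mod h1"
    have Nqt: "N = q * h1 + t" unfolding q_def t_def by simp
    have t: "0 \<le> t" "t < h1" unfolding t_def using h1 by auto
    have qQ: "q \<ge> Q + 1"
    proof -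
      have "(Q + 1) * h1 \<le> q * h1 + t" using N Nqt by simp
      moreover have "(q + 1) * h1 = q * h1 + h1" by (simp add: algebra_simps)
      ultimately have "(Q + 1) * h1 < (q + 1) * h1" using t by linarith
      then have "Q + 1 < q + 1" using mult_less_cancel_right[of "Q+1" h1 "q+1"] h1 by auto
      then show ?thesis by simp
    qed
    define \<kappa> where "\<kappa> = (\<lambda>u. if u = u1 then q + t * a u1 - S else t * a u + h1 * \<bar>a u\<bar>)"
    have k1: "\<forall>u. \<kappa> u \<ge> 0"
    proof
      fix u
      show "\<kappa> u \<ge> 0"
      proof (cases "u = u1")
        case True
        have "t * a u1 \<ge> - (h1 * \<bar>a u1\<bar>)"
        proof -
          have "\<bar>t * a u1\<bar> \<le> h1 * \<bar>a u1\<bar>" using t by (simp add: abs_mult mult_right_mono)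
          moreover have "- (t * a u1) \<le> \<bar>t * a u1\<bar>" by (rule abs_ge_minus_self)
          ultimately show ?thesis by linarith
        qed
        then show ?thesis using True qQ unfolding \<kappa>_def Q_def by (simp add: mult.commute)
      next
        case False
        have "\<bar>t * a u\<bar> \<le> h1 * \<bar>a u\<bar>" using t by (simp add: abs_mult mult_right_mono)
        moreover have "- (t * a u) \<le> \<bar>t * a u\<bar>" by (rule abs_ge_minus_self)
        ultimately have "0 \<le> t * a u + h1 * \<bar>a u\<bar>" by linarith
        then show ?thesis using False unfolding \<kappa>_def by simp
      qed
    qed
    have "(\<Sum>u\<in>V. \<kappa> u * h u) = \<kappa> u1 * h1 + (\<Sum>u\<in>V - {u1}. \<kappa> u * h u)"
      using sum.remove[OF fin u1, of "\<lambda>u. \<kappa> u * h u"] unfolding h1_def by simp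
    also have "(\<Sum>u\<in>V - {u1}. \<kappa> u * h u) = t * (\<Sum>u\<in>V - {u1}. a u * h u) + h1 * S"
    proof -
      have "(\<Sum>u\<in>V - {u1}. \<kappa> u * h u) = (\<Sum>u\<in>V - {u1}. t * (a u * h u) + h1 * (\<bar>a u\<bar> * h u))"
        by (rule sum.cong) (auto simp: \<kappa>_def distrib_right mult.assoc)
      also have "\<dots> = (\<Sum>u\<in>V - {u1}. t * (a u * h u)) + (\<Sum>u\<in>V - {u1}. h1 * (\<bar>a u\<bar> * h u))"
        by (rule sum.distrib)
      also have "\<dots> = t * (\<Sum>u\<in>V - {u1}. a u * h u) + h1 * S"
        unfolding S_def by (simp add: sum_distrib_left)
      finally show ?thesis .
    qed
    also have "\<kappa> u1 * h1 = q * h1 + t * (a u1 * h1) - S * h1" unfolding \<kappa>_def by (simp add: algebra_simps)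
    finally have "(\<Sum>u\<in>V. \<kappa> u * h u) = q * h1 + t * (a u1 * h1 + (\<Sum>u\<in>V - {u1}. a u * h u))"
      by (simp add: algebra_simps)
    then have "(\<Sum>u\<in>V. \<kappa> u * h u) = N" using aa Nqt by simp
    then show "\<exists>\<kappa>. (\<forall>u. \<kappa> u \<ge> 0) \<and> (\<Sum>u\<in>V. \<kappa> u * h u) = N" using k1 by blast
  qed
qed

lemma frobenius:
  fixes h :: "'a \<Rightarrow> nat"
  assumes fin: "finite V" and ne: "V \<noteq> {}" and hp: "\<forall>u\<in>V. h u \<ge> 1" and g: "Gcd ((\<lambda>u. int (h u)) ` V) = 1"
  shows "\<exists>F. \<forall>N\<ge>F. \<exists>\<kappa>::'a\<Rightarrow>nat. (\<Sum>u\<in>V. \<kappa> u * h u) = N"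
proof -
  obtain u1 where u1: "u1 \<in> V" using ne by blast
  have hp': "\<forall>u\<in>V. int (h u) \<ge> 1" using hp by simp
  obtain F where F: "\<forall>N\<ge>F. \<exists>\<kappa>. (\<forall>u. \<kappa> u \<ge> 0) \<and> (\<Sum>u\<in>V. \<kappa> u * int (h u)) = N"
    using frobenius_int[OF fin u1 hp' g] by blast
  show ?thesis
  proof (rule exI[of _ "nat F"], intro allI impI)
    fix N :: nat assume "nat F \<le> N"
    then have "int N \<ge> F" by simp
    then obtain \<kappa> where k: "\<forall>u. \<kappa> u \<ge> 0" "(\<Sum>u\<in>V. \<kappa> u * int (h u)) = int N" using F by blast
    have "int (\<Sum>u\<in>V. nat (\<kappa> u) * h u) = (\<Sum>u\<in>V. \<kappa> u * int (h u))"
      unfolding of_nat_sum by (rule sum.cong) (simp_all add: k(1))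
    then have "int (\<Sum>u\<in>V. nat (\<kappa> u) * h u) = int N" using k(2) by simp
    then have "(\<Sum>u\<in>V. nat (\<kappa> u) * h u) = N" by (simp only: of_nat_eq_iff)
    then show "\<exists>\<kappa>::'a\<Rightarrow>nat. (\<Sum>u\<in>V. \<kappa> u * h u) = N" by (rule exI[of _ "\<lambda>u. nat (\<kappa> u)"])
  qed
qed

definition filler :: "'a list \<Rightarrow> ('a \<Rightarrow> nat) \<Rightarrow> 'a list" where
  "filler vs \<kappa> = concat (map (\<lambda>u. replicate (\<kappa> u) u) vs)"

lemma filler_sum: "distinct vs \<Longrightarrow> sum_list (map h (filler vs \<kappa>)) = (\<Sum>u\<in>set vs. \<kappa> u * h u)"
proof (induction vs)
  case Nil then show ?case by (simp add: filler_def)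
next
  case (Cons a vs) then show ?case by (simp add: filler_def sum_list_replicate)
qed

lemma filler_set: "set (filler vs \<kappa>) \<subseteq> set vs"
  unfolding filler_def by auto

lemma concat_mem: "x \<in> set (f a) \<Longrightarrow> a \<in> set xs \<Longrightarrow> x \<in> set (concat (map f xs))"
  by auto

lemma pattern_exists:
  fixes h :: "'a \<Rightarrow> nat"
  assumes fin: "finite V" and ne: "V \<noteq> {}" and hp: "\<forall>u\<in>V. h u \<ge> 1" and g: "Gcd ((\<lambda>u. int (h u)) ` V) = 1"
  shows "\<exists>Pat Dm Hm. set Pat \<subseteq> V \<and> (\<forall>v\<in>V. h v \<le> Hm) \<and>
    (\<forall>A C v w d. v \<in> V \<longrightarrow> w \<in> V \<longrightarrow> Dm \<le> d \<longrightarrow> d \<le> Dm + 4 * Hm \<longrightarrow>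
      (\<exists>r r'. r < r' \<and> r' < length (A @ Pat @ C) \<and> (A @ Pat @ C) ! r = v \<and> (A @ Pat @ C) ! r' = w \<and>
         sum_list (map h (take r' (A @ Pat @ C))) = sum_list (map h (take r (A @ Pat @ C))) + d))"
proof -
  obtain F where F: "\<forall>N\<ge>F. \<exists>\<kappa>::'a\<Rightarrow>nat. (\<Sum>u\<in>V. \<kappa> u * h u) = N" using frobenius[OF assms] by blast
  obtain vs where vs: "distinct vs" "set vs = V" using finite_distinct_list[OF fin] by blast
  define fl where "fl = (\<lambda>N. filler vs (SOME \<kappa>. (\<Sum>u\<in>V. \<kappa> u * h u) = N))"
  have fl: "\<And>N. N \<ge> F \<Longrightarrow> sum_list (map h (fl N)) = N \<and> set (fl N) \<subseteq> V"
  proof -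
    fix N assume "N \<ge> F"
    then have "\<exists>\<kappa>::'a\<Rightarrow>nat. (\<Sum>u\<in>V. \<kappa> u * h u) = N" using F by blast
    then have "(\<Sum>u\<in>V. (SOME \<kappa>. (\<Sum>u\<in>V. \<kappa> u * h u) = N) u * h u) = N" by (rule someI_ex)
    then have "sum_list (map h (fl N)) = N" unfolding fl_def filler_sum[OF vs(1)] vs(2) .
    moreover have "set (fl N) \<subseteq> V" unfolding fl_def vs(2)[symmetric] by (rule filler_set)
    ultimately show "sum_list (map h (fl N)) = N \<and> set (fl N) \<subseteq> V" by (rule conjI)
  qed
  define Hm where "Hm = (\<Sum>u\<in>V. h u)"
  have Hm: "\<forall>v\<in>V. h v \<le> Hm"
  proof
    fix v assume "v \<in> V"
    then show "h v \<le> Hm" unfolding Hm_def by (rule member_le_sum) (auto simp: fin)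
  qed
  define Dm where "Dm = F + Hm"
  define items where "items = concat (map (\<lambda>v. concat (map (\<lambda>w. map (\<lambda>d. (v, w, d)) [Dm..<Dm + 4 * Hm + 1]) vs)) vs)"
  define seg where "seg = (\<lambda>(v, w, d). [v] @ fl (d - h v) @ [w])"
  define Pat where "Pat = concat (map seg items)"
  have itemsV: "\<And>v w d. (v, w, d) \<in> set items \<Longrightarrow> v \<in> V \<and> w \<in> V \<and> Dm \<le> d"
    unfolding items_def set_concat set_map using vs by auto
  have "set Pat \<subseteq> V"
  proof
    fix x assume "x \<in> set Pat"
    then obtain it where it: "it \<in> set items" "x \<in> set (seg it)" unfolding Pat_def by auto
    obtain v w d where vwd: "it = (v, w, d)" by (cases it) auto
    then have "v \<in> V" "w \<in> V" "Dm \<le> d" using itemsV it by blast+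
    moreover have "d - h v \<ge> F"
    proof -
      have "h v \<le> Hm" using Hm \<open>v \<in> V\<close> by blast
      then show ?thesis using \<open>Dm \<le> d\<close> unfolding Dm_def by linarith
    qed
    then have "set (fl (d - h v)) \<subseteq> V" using fl by blast
    then show "x \<in> V" using it vwd \<open>v \<in> V\<close> \<open>w \<in> V\<close> unfolding seg_def by auto
  qed
  moreover have "\<forall>A C v w d. v \<in> V \<longrightarrow> w \<in> V \<longrightarrow> Dm \<le> d \<longrightarrow> d \<le> Dm + 4 * Hm \<longrightarrow>
      (\<exists>r r'. r < r' \<and> r' < length (A @ Pat @ C) \<and> (A @ Pat @ C) ! r = v \<and> (A @ Pat @ C) ! r' = w \<and>
         sum_list (map h (take r' (A @ Pat @ C))) = sum_list (map h (take r (A @ Pat @ C))) + d)"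
  proof (intro allI impI)
    fix A C v w d assume v: "v \<in> V" and w: "w \<in> V" and d1: "Dm \<le> d" and d2: "d \<le> Dm + 4 * Hm"
    have dd: "d \<in> set [Dm..<Dm + 4 * Hm + 1]" unfolding set_upt atLeastLessThan_iff using d1 d2 by linarith
    have m1: "(v, w, d) \<in> set (map (\<lambda>d. (v, w, d)) [Dm..<Dm + 4 * Hm + 1])"
      unfolding set_map by (rule imageI[OF dd])
    have "(v, w, d) \<in> set items" unfolding items_def
    proof (rule concat_mem[where a = v])
      show "v \<in> set vs" using v vs(2) by simp
      show "(v, w, d) \<in> set (concat (map (\<lambda>w. map (\<lambda>d. (v, w, d)) [Dm..<Dm + 4 * Hm + 1]) vs))"
        by (rule concat_mem[where f="\<lambda>w. map (\<lambda>d. (v, w, d)) [Dm..<Dm + 4 * Hm + 1]" and a=w, OF m1]) (use w vs(2) in simp)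
    qed
    then obtain xs ys where xy: "items = xs @ (v, w, d) # ys" by (meson split_list)
    have hvH: "h v \<le> Hm" using Hm v by blast
    have dF: "d - h v \<ge> F" using d1 hvH unfolding Dm_def by linarith
    have hv: "h v \<le> d" using d1 hvH unfolding Dm_def by linarith
    define P1 where "P1 = A @ concat (map seg xs)"
    define f where "f = fl (d - h v)"
    have S: "A @ Pat @ C = P1 @ [v] @ f @ [w] @ (concat (map seg ys) @ C)"
      unfolding Pat_def xy P1_def f_def seg_def by simp
    have sf: "sum_list (map h f) = d - h v" unfolding f_def using fl[OF dF] by simp
    show "\<exists>r r'. r < r' \<and> r' < length (A @ Pat @ C) \<and> (A @ Pat @ C) ! r = v \<and> (A @ Pat @ C) ! r' = w \<and>
         sum_list (map h (take r' (A @ Pat @ C))) = sum_list (map h (take r (A @ Pat @ C))) + d"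
    proof (intro exI conjI)
      let ?r = "length P1" let ?r' = "length P1 + 1 + length f"
      show "?r < ?r'" by simp
      show "?r' < length (A @ Pat @ C)" unfolding S by simp
      show "(A @ Pat @ C) ! ?r = v" unfolding S by simp
      show "(A @ Pat @ C) ! ?r' = w" unfolding S by (simp add: nth_append)
      have t1: "take ?r (A @ Pat @ C) = P1" unfolding S by simp
      have t2: "take ?r' (A @ Pat @ C) = P1 @ [v] @ f" unfolding S by simp
      show "sum_list (map h (take ?r' (A @ Pat @ C))) = sum_list (map h (take ?r (A @ Pat @ C))) + d"
        unfolding t1 t2 using sf hv by simp
    qed
  qed
  ultimately show ?thesis using Hm by (intro exI[of _ Pat] exI[of _ Dm] exI[of _ Hm] conjI)
qed

lemma realize:
  assumes "finite S" "\<forall>u. count (mset P) u = card {e\<in>S. f e = u}"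
  shows "\<exists>Ls. distinct Ls \<and> set Ls = S \<and> map f Ls = P"
  using assms
proof (induction P arbitrary: S)
  case Nil
  have "S = {}"
  proof (rule ccontr)
    assume "S \<noteq> {}"
    then obtain e where e: "e \<in> S" by blast
    then have "card {e'\<in>S. f e' = f e} > 0" using Nil.prems(1) by (auto simp: card_gt_0_iff)
    then show False using Nil.prems(2) by simp
  qed
  then show ?case by simp
next
  case (Cons u P)
  have "card {e\<in>S. f e = u} > 0" using Cons.prems(2)[rule_format, of u] by simp
  then obtain e where e: "e \<in> S" "f e = u" by (auto simp: card_gt_0_iff)
  define S' where "S' = S - {e}"
  have "\<forall>u'. count (mset P) u' = card {e'\<in>S'. f e' = u'}"
  proof
    fix u'
    show "count (mset P) u' = card {e'\<in>S'. f e' = u'}"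
    proof (cases "u' = u")
      case True
      have "{e'\<in>S'. f e' = u'} = {e'\<in>S. f e' = u'} - {e}" unfolding S'_def by auto
      then have "card {e'\<in>S'. f e' = u'} = card {e'\<in>S. f e' = u'} - 1"
        using e True Cons.prems(1) by simp
      then show ?thesis using Cons.prems(2)[rule_format, of u'] True by simp
    next
      case False
      have "{e'\<in>S'. f e' = u'} = {e'\<in>S. f e' = u'}" unfolding S'_def using e False by auto
      then show ?thesis using Cons.prems(2)[rule_format, of u'] False by simp
    qed
  qed
  then obtain Ls where Ls: "distinct Ls" "set Ls = S'" "map f Ls = P"
    using Cons.IH[of S'] Cons.prems(1) unfolding S'_def by blast
  show ?case using Ls e unfolding S'_def by (intro exI[of _ "e # Ls"]) auto
qed


context pbrat begin

lemma p_le: "a \<le> b \<Longrightarrow> p a \<le> p b" using p_mono by (simp add: strict_mono_less_eq)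

lemma H_step: "a \<le> b \<Longrightarrow> w \<in> bV B (p b) \<Longrightarrow> H (p b) w = push B (p a) (p b) (H (p a)) w"
  unfolding H_def by (rule push_comp) (auto simp: p_le)

lemma sum_dl: "finite S \<Longrightarrow> v \<in> S \<Longrightarrow> (\<Sum>y\<in>S. f y * dl y v) = f v"
proof -
  assume "finite S" "v \<in> S"
  have "(\<Sum>y\<in>S. f y * dl y v) = (\<Sum>y\<in>S. if y = v then f y else 0)"
    by (rule sum.cong) (auto simp: dl_def)
  also have "\<dots> = f v" using \<open>finite S\<close> \<open>v \<in> S\<close> by (simp add: sum.delta)
  finally show ?thesis .
qed

lemma push_lb:
  assumes ab: "a < b" and u: "u \<in> bV B (p a)" and w: "w \<in> bV B (p b)" and c: "c \<ge> 0"
    and f: "\<forall>v\<in>bV B (p a). c * dl u v \<le> f v"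
  shows "c \<le> push B (p a) (p b) f w"
proof -
  have "c * 1 \<le> c * push B (p a) (p b) (dl u) w"
    using push_dl_pos[OF ab u w] c by (intro mult_left_mono) auto
  also have "\<dots> = push B (p a) (p b) (\<lambda>v. c * dl u v) w" by (rule push_smult[symmetric])
  also have "\<dots> \<le> push B (p a) (p b) f w" using f w ab by (intro push_mono) (auto simp: p_le less_imp_le)
  finally show ?thesis by simp
qed

lemma G1:
  assumes ab: "a \<le> b" and t: "t \<ge> 0" and Ha: "\<forall>v\<in>bV B (p a). H (p a) v \<ge> t"
  shows "\<forall>w\<in>bV B (p b). H (p b) w \<ge> t"
proof (cases "a = b")
  case True then show ?thesis using Ha by simp
next
  case False
  then have ab': "a < b" using ab by simp
  obtain u where u: "u \<in> bV B (p a)" using V_ne by blast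
  show ?thesis
  proof
    fix w assume w: "w \<in> bV B (p b)"
    have "t \<le> push B (p a) (p b) (H (p a)) w"
      using Ha t by (intro push_lb[OF ab' u w t]) (auto simp: dl_def)
    then show "t \<le> H (p b) w" using H_step[OF ab w] by simp
  qed
qed

lemma Gcd_single: "Gcd {x::int} = \<bar>x\<bar>" by simp

lemma G2:
  assumes hyp: "rational_subgroup B = int_multiples_of_unit B"
    and t: "t \<ge> 2" and Ha: "\<forall>v\<in>bV B (p a). H (p a) v \<ge> t"
  shows "\<forall>w\<in>bV B (p (Suc a)). H (p (Suc a)) w \<ge> 2 * t"
proof -
  obtain u1 where u1: "u1 \<in> bV B (p a)" using V_ne by blast
  obtain u2 where u2: "u2 \<in> bV B (p a)" "u2 \<noteq> u1"
  proof (rule ccontr)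
    assume "\<not> thesis"
    then have "\<forall>u\<in>bV B (p a). u = u1" using that by blast
    then have "bV B (p a) = {u1}" using u1 by blast
    then have "Gcd (H (p a) ` bV B (p a)) = \<bar>H (p a) u1\<bar>" by simp
    moreover have "\<bar>H (p a) u1\<bar> \<ge> 2" using Ha u1 t by fastforce
    ultimately show False using gcd_p[OF hyp, of "p a"] by simp
  qed
  show ?thesis
  proof
    fix w assume w: "w \<in> bV B (p (Suc a))"
    have ab: "p a \<le> p (Suc a)" by (simp add: p_le)
    have "push B (p a) (p (Suc a)) (\<lambda>v. \<Sum>u\<in>{u1, u2}. t * dl u v) w \<le> push B (p a) (p (Suc a)) (H (p a)) w"
    proof (rule push_mono[OF ab _ w], rule ballI)
      fix v assume v: "v \<in> bV B (p a)"
      show "(\<Sum>u\<in>{u1, u2}. t * dl u v) \<le> H (p a) v"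
        using u2 Ha v t by (auto simp: dl_def)
    qed
    moreover have "push B (p a) (p (Suc a)) (\<lambda>v. \<Sum>u\<in>{u1, u2}. t * dl u v) w =
        t * push B (p a) (p (Suc a)) (dl u1) w + t * push B (p a) (p (Suc a)) (dl u2) w"
    proof -
      have "push B (p a) (p (Suc a)) (\<lambda>v. \<Sum>u\<in>{u1, u2}. t * dl u v) w =
          (\<Sum>u\<in>{u1, u2}. push B (p a) (p (Suc a)) (\<lambda>v. t * dl u v) w)"
        by (rule push_sum) simp
      also have "\<dots> = (\<Sum>u\<in>{u1, u2}. t * push B (p a) (p (Suc a)) (dl u) w)"
        by (simp only: push_smult)
      finally show ?thesis using u2 by simp
    qed
    moreover have "push B (p a) (p (Suc a)) (dl u1) w \<ge> 1" "push B (p a) (p (Suc a)) (dl u2) w \<ge> 1"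
      using push_dl_pos[of a "Suc a"] u1 u2 w by auto
    moreover have "t * 1 \<le> t * push B (p a) (p (Suc a)) (dl u1) w"
      using calculation(3) t by (intro mult_left_mono) auto
    moreover have "t * 1 \<le> t * push B (p a) (p (Suc a)) (dl u2) w"
      using calculation(4) t by (intro mult_left_mono) auto
    ultimately have "2 * t \<le> push B (p a) (p (Suc a)) (H (p a)) w"
      by linarith
    then show "2 * t \<le> H (p (Suc a)) w" using H_step[of a "Suc a" w] w by simp
  qed
qed

lemma G3:
  assumes hyp: "rational_subgroup B = int_multiples_of_unit B"
    and nt: "\<exists>a0. \<exists>v\<in>bV B (p a0). H (p a0) v \<ge> 2"
  shows "\<exists>a. \<forall>b\<ge>a. \<forall>w\<in>bV B (p b). H (p b) w \<ge> K"
proof -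
  obtain a0 v where v: "v \<in> bV B (p a0)" "H (p a0) v \<ge> 2" using nt by blast
  have st: "\<forall>w\<in>bV B (p (Suc a0)). H (p (Suc a0)) w \<ge> 2"
  proof
    fix w assume w: "w \<in> bV B (p (Suc a0))"
    have "2 \<le> push B (p a0) (p (Suc a0)) (H (p a0)) w"
    proof (rule push_lb[OF _ v(1) w])
      show "\<forall>va\<in>bV B (p a0). 2 * dl v va \<le> H (p a0) va"
      proof
        fix va assume va: "va \<in> bV B (p a0)"
        show "2 * dl v va \<le> H (p a0) va" using H_pos[OF va] v by (cases "va = v") (auto simp: dl_def)
      qed
    qed auto
    then show "2 \<le> H (p (Suc a0)) w" using H_step[of a0 "Suc a0" w] w by simp
  qed
  have ind: "\<forall>w\<in>bV B (p (Suc a0 + j)). H (p (Suc a0 + j)) w \<ge> 2 ^ Suc j" for j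
  proof (induction j)
    case 0 then show ?case using st by simp
  next
    case (Suc j)
    have "(2::int) ^ Suc j \<ge> 2" using one_le_power[of "2::int" j] by simp
    then have "\<forall>w\<in>bV B (p (Suc (Suc a0 + j))). H (p (Suc (Suc a0 + j))) w \<ge> 2 * 2 ^ Suc j"
      using G2[OF hyp _ Suc.IH] by blast
    then show ?case by simp
  qed
  define j where "j = nat K"
  have "K \<le> 2 ^ Suc j"
  proof -
    have "j < 2 ^ j" by (rule less_exp)
    then have "int j < int (2 ^ j)" by (simp only: of_nat_less_iff)
    then have "int j < 2 ^ j" by simp
    moreover have "(0::int) \<le> 2 ^ j" by simp
    ultimately show ?thesis unfolding j_def by (cases "0 \<le> K") auto
  qed
  then have hK: "\<forall>w\<in>bV B (p (Suc a0 + j)). H (p (Suc a0 + j)) w \<ge> K"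
  proof -
    assume K: "K \<le> 2 ^ Suc j"
    show ?thesis
    proof
      fix w assume "w \<in> bV B (p (Suc a0 + j))"
      then have "2 ^ Suc j \<le> H (p (Suc a0 + j)) w" using ind[of j] by blast
      then show "K \<le> H (p (Suc a0 + j)) w" using K by linarith
    qed
  qed
  show ?thesis
  proof (cases "K \<ge> 0")
    case True
    show ?thesis
    proof (intro exI allI impI)
      fix b assume "Suc a0 + j \<le> b"
      then show "\<forall>w\<in>bV B (p b). K \<le> H (p b) w" by (rule G1[OF _ True hK])
    qed
  next
    case False
    show ?thesis
    proof (intro exI allI impI ballI)
      fix b w assume "w \<in> bV B (p b)"
      then show "K \<le> H (p b) w" using H_pos[of w b] False by linarith
    qed
  qed
qed

lemma G4:
  assumes hyp: "rational_subgroup B = int_multiples_of_unit B"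
    and nt: "\<exists>a0. \<exists>v\<in>bV B (p a0). H (p a0) v \<ge> 2"
  shows "\<exists>b>l. \<forall>u\<in>bV B (p l). \<forall>w\<in>bV B (p b). push B (p l) (p b) (dl u) w \<ge> K"
proof -
  define Kp where "Kp = max K 1"
  define Vs where "Vs = bV B (p (Suc l))"
  define G where "G = (\<Sum>y\<in>Vs. H (p (Suc l)) y)"
  obtain y0 where y0: "y0 \<in> Vs" using V_ne unfolding Vs_def by blast
  have G1': "G \<ge> 1"
  proof -
    have "H (p (Suc l)) y0 \<le> G" unfolding G_def
      using y0 H_pos V_fin unfolding Vs_def by (intro member_le_sum) (auto intro: order_trans[OF zero_le_one])
    then show ?thesis using H_pos[of y0 "Suc l"] y0 unfolding Vs_def by simp
  qed
  obtain a where a: "\<forall>b\<ge>a. \<forall>w\<in>bV B (p b). H (p b) w \<ge> Kp * G" using G3[OF hyp nt] by blast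
  define b where "b = max a (Suc (Suc l))"
  have bl: "Suc l < b" "l < b" unfolding b_def by auto
  show ?thesis
  proof (intro exI[of _ b] conjI ballI)
    show "l < b" by (rule bl(2))
    fix u w assume u: "u \<in> bV B (p l)" and w: "w \<in> bV B (p b)"
    have Hw: "H (p b) w \<ge> Kp * G" using a w unfolding b_def by simp
    have "H (p b) w = push B (p (Suc l)) (p b) (H (p (Suc l))) w" using H_step[of "Suc l" b w] bl w by simp
    also have "\<dots> = push B (p (Suc l)) (p b) (\<lambda>v. \<Sum>y\<in>Vs. H (p (Suc l)) y * dl y v) w"
      using w bl unfolding Vs_def by (intro push_cong) (auto simp: sum_dl p_le V_fin)
    also have "\<dots> = (\<Sum>y\<in>Vs. H (p (Suc l)) y * push B (p (Suc l)) (p b) (dl y) w)"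
      unfolding Vs_def using V_fin by (simp add: push_sum push_smult)
    finally have Heq: "H (p b) w = (\<Sum>y\<in>Vs. H (p (Suc l)) y * push B (p (Suc l)) (p b) (dl y) w)" .
    obtain ys where ys: "ys \<in> Vs" "push B (p (Suc l)) (p b) (dl ys) w \<ge> Kp"
    proof (rule ccontr)
      assume nt: "\<not> thesis"
      have lt: "\<forall>y\<in>Vs. push B (p (Suc l)) (p b) (dl y) w \<le> Kp - 1"
      proof
        fix y assume y: "y \<in> Vs"
        show "push B (p (Suc l)) (p b) (dl y) w \<le> Kp - 1"
        proof (rule ccontr)
          assume "\<not> push B (p (Suc l)) (p b) (dl y) w \<le> Kp - 1"
          then have "push B (p (Suc l)) (p b) (dl y) w \<ge> Kp" by linarith
          then show False using that[OF y] nt by blast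
        qed
      qed
      have "(\<Sum>y\<in>Vs. H (p (Suc l)) y * push B (p (Suc l)) (p b) (dl y) w) \<le> (\<Sum>y\<in>Vs. H (p (Suc l)) y * (Kp - 1))"
        using lt H_pos unfolding Vs_def by (intro sum_mono mult_left_mono) (auto intro: order_trans[OF zero_le_one])
      also have "\<dots> = G * (Kp - 1)" unfolding G_def by (rule sum_distrib_right[symmetric])
      also have "\<dots> < Kp * G" using G1' by (simp add: algebra_simps)
      finally show False using Heq Hw by simp
    qed
    have "push B (p l) (p b) (dl u) w = push B (p (Suc l)) (p b) (push B (p l) (p (Suc l)) (dl u)) w"
      using w bl by (intro push_comp) (auto simp: p_le)
    also have "\<dots> \<ge> push B (p (Suc l)) (p b) (dl ys) w"
    proof (rule push_mono)
      show "p (Suc l) \<le> p b" using bl by (simp add: p_le)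
      show "w \<in> bV B (p b)" by (rule w)
      show "\<forall>v\<in>bV B (p (Suc l)). dl ys v \<le> push B (p l) (p (Suc l)) (dl u) v"
      proof
        fix v assume v: "v \<in> bV B (p (Suc l))"
        show "dl ys v \<le> push B (p l) (p (Suc l)) (dl u) v"
          using push_dl_pos[of l "Suc l" u v] push_nonneg[of "p l" "p (Suc l)" "dl u" v] u v dl_nonneg
          by (auto simp: dl_def p_le)
      qed
    qed
    finally show "K \<le> push B (p l) (p b) (dl u) w" using ys unfolding Kp_def by simp
  qed
qed

end

locale tbrat = brat + fixes n assumes n_tel: "is_telescoping_seq n"
begin

abbreviation "DD \<equiv> telescope B n"

lemma n0: "n 0 = 0" and n_mono: "strict_mono n" using n_tel unfolding is_telescoping_seq_def by auto

lemma n_less: "n m < n (Suc m)" using n_mono by (simp add: strict_mono_Suc_iff)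

lemma DV: "bV DD k = bV B (n k)" by (simp add: telescope_def)
lemma DE: "bE DD (Suc m) = {q. fpath B (n m) (n (Suc m)) q}" by (simp add: telescope_def)
lemma DE0: "bE DD 0 = {}" by (simp add: telescope_def)
lemma Dbs: "bs DD (Suc m) q = bs B (Suc (n m)) (hd q)" by (simp add: telescope_def)
lemma Dbr: "br DD (Suc m) q = br B (n (Suc m)) (last q)" by (simp add: telescope_def)

lemma D_brat: "bratteli DD"
  unfolding bratteli_def
proof (intro conjI allI ballI)
  show "\<exists>v0. bV DD 0 = {v0}" using brat n0 unfolding bratteli_def DV by simp
  fix k
  show "finite (bV DD k)" "bV DD k \<noteq> {}" unfolding DV using V_fin V_ne by auto
  show "bE DD 0 = {}" by (rule DE0)
  show "finite (bE DD k)"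
    by (cases k) (simp_all add: DE0 DE fpath_fin)
next
  fix k e assume "e \<in> bE DD (Suc k)"
  then have f: "fpath B (n k) (n (Suc k)) e" unfolding DE by simp
  show "bs DD (Suc k) e \<in> bV DD k"
    unfolding Dbs Dbr DV using fpath_hd_V[OF f] fpath_last_V[OF f] by simp
  show "br DD (Suc k) e \<in> bV DD (Suc k)"
    unfolding Dbs Dbr DV using fpath_hd_V[OF f] fpath_last_V[OF f] by simp
qed

lemma D_fibre: "fibre DD (Suc m) y = PS (n m) (n (Suc m)) y"
  unfolding fibre_def PS_def DE Dbr by simp

lemma D_sum: assumes "y \<in> bV B (n (Suc m))"
  shows "(\<Sum>e\<in>fibre DD (Suc m) y. f (bs DD (Suc m) e)) = push B (n m) (n (Suc m)) f y"
  unfolding D_fibre Dbs using push_paths[OF n_less assms] by simp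

lemma D_card: assumes "y \<in> bV B (n (Suc m))"
  shows "int (card {e\<in>fibre DD (Suc m) y. bs DD (Suc m) e = u}) = push B (n m) (n (Suc m)) (dl u) y"
  unfolding D_fibre Dbs using push_dl_card[OF n_less assms, of u] by simp

lemma D_fibre_fin: "finite (fibre DD (Suc m) y)"
  unfolding D_fibre by (rule PS_fin)

end

locale tlord = tbrat B n + lord "telescope B n" L c
  for B :: "('v, 'e) bdiag" and n and L and c
begin

lemma link:
  assumes Hnn: "\<forall>m. \<forall>v\<in>bV B (n m). H (n m) v \<ge> 0"
  shows "v \<in> bV B (n m) \<Longrightarrow> int (hh m v) = H (n m) v"
proof (induction m arbitrary: v)
  case 0 then show ?case using n0 by (simp add: H_def)
next
  case (Suc m)
  have vD: "v \<in> bV DD (Suc m)" using Suc.prems DV by simp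
  have "int (hh (Suc m) v) = (\<Sum>e\<in>fibre DD (Suc m) v. int (hh m (bs DD (Suc m) e)))"
    using hh_sum[OF vD] by simp
  also have "\<dots> = (\<Sum>e\<in>fibre DD (Suc m) v. H (n m) (bs DD (Suc m) e))"
  proof (rule sum.cong)
    fix e assume "e \<in> fibre DD (Suc m) v"
    then have "e \<in> bE DD (Suc m)" using fibre_E by blast
    then have "bs DD (Suc m) e \<in> bV B (n m)" using DE_bs DV by blast
    then show "int (hh m (bs DD (Suc m) e)) = H (n m) (bs DD (Suc m) e)" by (rule Suc.IH)
  qed simp
  also have "\<dots> = push B (n m) (n (Suc m)) (H (n m)) v" using D_sum[OF Suc.prems] .
  also have "\<dots> = H (n (Suc m)) v" unfolding H_def
    using Suc.prems n_less by (intro push_comp[symmetric]) (auto simp: less_imp_le)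
  finally show ?case .
qed

end


context lord begin

lemma wm_single:
  assumes all_max: "\<And>x. x \<in> path_space D \<Longrightarrow> max_path D om x"
  shows "weakly_mixing (path_topology D) (vershik D om)"
proof -
  have ps: "\<And>x. x \<in> path_space D \<Longrightarrow> x = xmax" using all_max max_unique by blast
  have xmin_eq: "xmin = xmax" using ps xmin_path unfolding min_path_def by blast
  have Tx: "vershik D om xmax = xmax"
  proof -
    have "(THE y. min_path D om y) = xmin" using xmin_path min_unique by blast
    then show ?thesis using xmax_path xmin_eq unfolding vershik_def by simp
  qed
  have inU: "\<And>U. openin (prod_topology (path_topology D) (path_topology D)) U \<Longrightarrow> U \<noteq> {} \<Longrightarrow> (xmax, xmax) \<in> U"
  proof -
    fix U assume oU: "openin (prod_topology (path_topology D) (path_topology D)) U" and ne: "U \<noteq> {}"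
    then obtain a b where ab: "(a, b) \<in> U" by auto
    from oU[unfolded openin_prod_topology_alt, rule_format, OF ab]
    obtain U1 U2 where "openin (path_topology D) U1" "openin (path_topology D) U2" "a \<in> U1" "b \<in> U2"
      by blast
    then have "a \<in> path_space D" "b \<in> path_space D" using cyl_open by blast+
    then have "a = xmax" "b = xmax" using ps by blast+
    then show "(xmax, xmax) \<in> U" using ab by simp
  qed
  show ?thesis
    unfolding weakly_mixing_def top_transitive_def
  proof (intro allI impI)
    fix U W assume a: "openin (prod_topology (path_topology D) (path_topology D)) U \<and>
      openin (prod_topology (path_topology D) (path_topology D)) W \<and> U \<noteq> {} \<and> W \<noteq> {}"
    have "(xmax, xmax) \<in> U" "(xmax, xmax) \<in> W" using inU a by blast+
    moreover have "((\<lambda>(x, y). (vershik D om x, vershik D om y)) ^^ 1) (xmax, xmax) = (xmax, xmax)"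
      using Tx by simp
    ultimately have "(xmax, xmax) \<in> ((\<lambda>(x, y). (vershik D om x, vershik D om y)) ^^ 1) ` U \<inter> W"
      by (intro IntI image_eqI[where f="((\<lambda>(x, y). (vershik D om x, vershik D om y)) ^^ 1)" and x="(xmax, xmax)"]) auto
    then show "\<exists>n>0. ((\<lambda>(x, y). (vershik D om x, vershik D om y)) ^^ n) ` U \<inter> W \<noteq> {}"
      by (intro exI[of _ 1]) auto
  qed
qed

end

context pbrat begin

lemma trivial_case:
  assumes triv: "\<forall>a. \<forall>v\<in>bV B (p a). H (p a) v = 1"
  shows "\<exists>n om. is_telescoping_seq n \<and> proper_ordering (telescope B n) om \<and>
           weakly_mixing (path_topology (telescope B n)) (vershik (telescope B n) om)"
proof -
  interpret tbrat B p by unfold_locales (rule p_tel)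
  have single: "\<exists>u. bV B (p a) = {u}" for a
  proof (rule ccontr)
    assume ns: "\<nexists>u. bV B (p a) = {u}"
    obtain u1 where u1: "u1 \<in> bV B (p a)" using V_ne by blast
    obtain u2 where u2: "u2 \<in> bV B (p a)" "u2 \<noteq> u1" using ns u1 by blast
    obtain w where w: "w \<in> bV B (p (Suc a))" using V_ne by blast
    have ab: "p a \<le> p (Suc a)" by (simp add: p_le)
    have "push B (p a) (p (Suc a)) (\<lambda>v. \<Sum>u\<in>{u1, u2}. 1 * dl u v) w \<le> push B (p a) (p (Suc a)) (H (p a)) w"
    proof (rule push_mono[OF ab _ w], rule ballI)
      fix v assume v: "v \<in> bV B (p a)"
      show "(\<Sum>u\<in>{u1, u2}. 1 * dl u v) \<le> H (p a) v" using u2 triv v by (auto simp: dl_def)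
    qed
    moreover have "push B (p a) (p (Suc a)) (\<lambda>v. \<Sum>u\<in>{u1, u2}. 1 * dl u v) w =
        (\<Sum>u\<in>{u1, u2}. push B (p a) (p (Suc a)) (\<lambda>v. 1 * dl u v) w)"
      by (rule push_sum) simp
    moreover have "(\<Sum>u\<in>{u1, u2}. push B (p a) (p (Suc a)) (\<lambda>v. 1 * dl u v) w) =
        push B (p a) (p (Suc a)) (dl u1) w + push B (p a) (p (Suc a)) (dl u2) w"
      using u2 by simp
    moreover have "push B (p a) (p (Suc a)) (dl u1) w \<ge> 1" "push B (p a) (p (Suc a)) (dl u2) w \<ge> 1"
      using push_dl_pos[of a "Suc a"] u1 u2 w by auto
    moreover have "push B (p a) (p (Suc a)) (H (p a)) w = 1"
      using H_step[of a "Suc a" w] w triv by simp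
    ultimately show False by linarith
  qed
  define c where "c = (\<lambda>a. SOME v. v \<in> bV B (p a))"
  have Vc: "bV B (p a) = {c a}" for a
  proof -
    obtain u where u: "bV B (p a) = {u}" using single by blast
    then have "c a = u" unfolding c_def by simp
    then show ?thesis using u by simp
  qed
  have cnt1: "push B (p a) (p (Suc a)) (dl (c a)) y = 1" if y: "y \<in> bV B (p (Suc a))" for a y
  proof -
    have "1 = H (p (Suc a)) y" using triv y by simp
    also have "\<dots> = push B (p a) (p (Suc a)) (H (p a)) y" using H_step[of a "Suc a" y] y by simp
    also have "\<dots> = push B (p a) (p (Suc a)) (dl (c a)) y"
      using y triv Vc[of a] by (intro push_cong) (auto simp: dl_def p_le)
    finally show ?thesis by simp
  qed
  define L where "L = (\<lambda>k y. case k of 0 \<Rightarrow> [] | Suc m \<Rightarrow>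
     (SOME Ls. distinct Ls \<and> set Ls = fibre DD (Suc m) y \<and> map (bs DD (Suc m)) Ls = [c m]))"
  have Lex: "distinct (L (Suc m) y) \<and> set (L (Suc m) y) = fibre DD (Suc m) y \<and> map (bs DD (Suc m)) (L (Suc m) y) = [c m]"
    if y: "y \<in> bV DD (Suc m)" for m y
  proof -
    have "\<exists>Ls. distinct Ls \<and> set Ls = fibre DD (Suc m) y \<and> map (bs DD (Suc m)) Ls = [c m]"
    proof (rule realize[OF D_fibre_fin], rule allI)
      fix u
      show "count (mset [c m]) u = card {e \<in> fibre DD (Suc m) y. bs DD (Suc m) e = u}"
      proof (cases "u = c m")
        case True
        have "int (card {e \<in> fibre DD (Suc m) y. bs DD (Suc m) e = u}) = 1"
          using D_card[of y m u] cnt1[of y m] y True DV by simp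
        then show ?thesis using True by simp
      next
        case False
        have "\<forall>e \<in> fibre DD (Suc m) y. bs DD (Suc m) e \<noteq> u"
        proof (intro ballI notI)
          fix e assume "e \<in> fibre DD (Suc m) y" "bs DD (Suc m) e = u"
          then have "e \<in> bE DD (Suc m)" "u = bs DD (Suc m) e" unfolding fibre_def by auto
          then have "u \<in> bV DD m" using D_brat unfolding bratteli_def by blast
          then have "u \<in> bV B (p m)" using DV by simp
          then show False using Vc[of m] False by simp
        qed
        then have "{e \<in> fibre DD (Suc m) y. bs DD (Suc m) e = u} = {}" by blast
        then have c0: "card {e \<in> fibre DD (Suc m) y. bs DD (Suc m) e = u} = 0" by (simp only: card.empty)
        show ?thesis using False c0 by simp
      qed
    qed
    then show ?thesis unfolding L_def by (simp, rule someI_ex)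
  qed
  have lord: "lord DD L c"
  proof
    show "bratteli DD" by (rule D_brat)
    show "positive_incidence DD"
      unfolding positive_incidence_def
    proof (intro allI ballI)
      fix k v w assume v: "v \<in> bV DD k" and w: "w \<in> bV DD (Suc k)"
      have "v = c k" using v Vc DV by simp
      then have "int (card {e \<in> fibre DD (Suc k) w. bs DD (Suc k) e = v}) = 1"
        using D_card[of w k v] cnt1[of w k] w DV by simp
      then have "{e \<in> fibre DD (Suc k) w. bs DD (Suc k) e = v} \<noteq> {}"
      proof -
        assume h: "int (card {e \<in> fibre DD (Suc k) w. bs DD (Suc k) e = v}) = 1"
        show ?thesis
        proof
          assume "{e \<in> fibre DD (Suc k) w. bs DD (Suc k) e = v} = {}"
          then have "card {e \<in> fibre DD (Suc k) w. bs DD (Suc k) e = v} = 0" by (simp only: card.empty)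
          then show False using h by simp
        qed
      qed
      then show "\<exists>e\<in>bE DD (Suc k). bs DD (Suc k) e = v \<and> br DD (Suc k) e = w" unfolding fibre_def by blast
    qed
    fix k v assume v: "v \<in> bV DD (Suc k)"
    note l = Lex[OF v]
    show "set (L (Suc k) v) = fibre DD (Suc k) v" "distinct (L (Suc k) v)" using l by auto
    show "L (Suc k) v \<noteq> []" using l by auto
    show "bs DD (Suc k) (hd (L (Suc k) v)) = c k" using l by (cases "L (Suc k) v") auto
    show "bs DD (Suc k) (last (L (Suc k) v)) = c k" using l by (cases "L (Suc k) v") auto
  next
    fix k show "c k \<in> bV DD k" using Vc DV by simp
  qed
  have tb: "tbrat B p" by (rule tbrat.intro[OF brat_axioms]) (simp add: tbrat_axioms_def p_tel)
  interpret tlord B p L c by (rule tlord.intro[OF tb lord])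
  have "weakly_mixing (path_topology DD) (vershik DD om)"
  proof (rule wm_single)
    fix x assume x: "x \<in> path_space DD"
    show "max_path DD om x" unfolding max_path_def
    proof (intro conjI allI)
      show "x \<in> path_space DD" by (rule x)
      fix i
      have e: "x i \<in> bE DD (Suc i)" using ps_E[OF x] .
      have "map (bs DD (Suc i)) (L (Suc i) (br DD (Suc i) (x i))) = [c i]" using Lex[OF DE_br[OF e]] by blast
      then have "length (map (bs DD (Suc i)) (L (Suc i) (br DD (Suc i) (x i)))) = 1" by simp
      then have "length (L (Suc i) (br DD (Suc i) (x i))) = 1" by simp
      then show "is_max_edge DD om (Suc i) (x i)" using max_iff[OF e] ix_lt[OF e] by simp
    qed
  qed
  then show ?thesis using proper p_tel by blast
qed

end

lemma count_rep: "distinct vs \<Longrightarrow>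
  count (mset (concat (map (\<lambda>u. replicate (f u) u) vs))) x = (if x \<in> set vs then f x else 0)"
  by (induction vs) auto

lemma count_le_len: "count (mset xs) x \<le> length xs"
  by (induction xs) auto

lemma sum_list_cong: "(\<And>x. x \<in> set xs \<Longrightarrow> f x = g x) \<Longrightarrow> sum_list (map f xs) = sum_list (map g xs)"
  by (metis map_cong)

context pbrat begin

lemma nontrivial_case:
  assumes hyp: "rational_subgroup B = int_multiples_of_unit B"
    and nt: "\<exists>a0. \<exists>v\<in>bV B (p a0). H (p a0) v \<ge> 2"
  shows "\<exists>n om. is_telescoping_seq n \<and> proper_ordering (telescope B n) om \<and>
           weakly_mixing (path_topology (telescope B n)) (vershik (telescope B n) om)"
proof -
  define hn where "hn = (\<lambda>l v. nat (H l v))"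
  define Spec where
    "Spec = (\<lambda>l (Pat, Dm::nat, Hm::nat). set Pat \<subseteq> bV B l \<and> (\<forall>v\<in>bV B l. hn l v \<le> Hm) \<and>
    (\<forall>A C v w d. v \<in> bV B l \<longrightarrow> w \<in> bV B l \<longrightarrow> Dm \<le> d \<longrightarrow> d \<le> Dm + 4 * Hm \<longrightarrow>
      (\<exists>r r'. r < r' \<and> r' < length (A @ Pat @ C) \<and> (A @ Pat @ C) ! r = v \<and> (A @ Pat @ C) ! r' = w \<and>
         sum_list (map (hn l) (take r' (A @ Pat @ C))) = sum_list (map (hn l) (take r (A @ Pat @ C))) + d)))"
  define PP where "PP = (\<lambda>l. SOME t. Spec l t)"
  have PPspec: "Spec (p a) (PP (p a))" for a
  proof -
    have hp: "\<forall>u\<in>bV B (p a). hn (p a) u \<ge> 1" using H_pos unfolding hn_def by fastforce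
    have "(\<lambda>u. int (hn (p a) u)) ` bV B (p a) = H (p a) ` bV B (p a)"
      unfolding hn_def using H_pos by (intro image_cong) (auto simp: order_trans[OF zero_le_one])
    then have g: "Gcd ((\<lambda>u. int (hn (p a) u)) ` bV B (p a)) = 1" using gcd_p[OF hyp] by simp
    obtain Pat Dm Hm where "set Pat \<subseteq> bV B (p a) \<and> (\<forall>v\<in>bV B (p a). hn (p a) v \<le> Hm) \<and>
    (\<forall>A C v w d. v \<in> bV B (p a) \<longrightarrow> w \<in> bV B (p a) \<longrightarrow> Dm \<le> d \<longrightarrow> d \<le> Dm + 4 * Hm \<longrightarrow>
      (\<exists>r r'. r < r' \<and> r' < length (A @ Pat @ C) \<and> (A @ Pat @ C) ! r = v \<and> (A @ Pat @ C) ! r' = w \<and>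
         sum_list (map (hn (p a)) (take r' (A @ Pat @ C))) = sum_list (map (hn (p a)) (take r (A @ Pat @ C))) + d))"
      using pattern_exists[OF V_fin V_ne hp g] by blast
    then have "Spec (p a) (Pat, Dm, Hm)" unfolding Spec_def by simp
    then show ?thesis unfolding PP_def by (rule someI)
  qed
  define Kn where "Kn = (\<lambda>l. length (fst (PP l)) + 2)"
  define nxt where "nxt = (\<lambda>s. SOME b. s < b \<and> (\<forall>u\<in>bV B (p s). \<forall>w\<in>bV B (p b). push B (p s) (p b) (dl u) w \<ge> int (Kn (p s))))"
  have nxt: "s < nxt s \<and> (\<forall>u\<in>bV B (p s). \<forall>w\<in>bV B (p (nxt s)). push B (p s) (p (nxt s)) (dl u) w \<ge> int (Kn (p s)))" for s
    unfolding nxt_def by (rule someI_ex) (rule G4[OF hyp nt])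
  define \<sigma> where "\<sigma> = rec_nat 0 (\<lambda>m s. nxt s)"
  have s0: "\<sigma> 0 = 0" and sS: "\<sigma> (Suc m) = nxt (\<sigma> m)" for m unfolding \<sigma>_def by simp_all
  define n where "n = (\<lambda>m. p (\<sigma> m))"
  have ntel: "is_telescoping_seq n"
    unfolding is_telescoping_seq_def n_def strict_mono_Suc_iff using s0 p0 sS nxt p_less by simp
  have nS: "n (Suc m) = p (nxt (\<sigma> m))" for m unfolding n_def sS by simp
  interpret tbrat B n by unfold_locales (rule ntel)
  define cB where "cB = (\<lambda>l. SOME v. v \<in> bV B l)"
  have cB: "cB l \<in> bV B l" for l unfolding cB_def using V_ne by (simp add: some_in_eq)
  define c where "c = (\<lambda>m. cB (n m))"
  define vsl where "vsl = (\<lambda>l. SOME vs. distinct vs \<and> set vs = bV B l)"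
  have vsl: "distinct (vsl l) \<and> set (vsl l) = bV B l" for l
    unfolding vsl_def by (rule someI_ex) (use finite_distinct_list[OF V_fin] in blast)
  define Pat where "Pat = (\<lambda>m. fst (PP (n m)))"
  define cnt where "cnt = (\<lambda>m y u. card {e\<in>fibre DD (Suc m) y. bs DD (Suc m) e = u})"
  define need where "need = (\<lambda>m u. count (mset (Pat m)) u + (if u = c m then 2 else 0))"
  define Rest where "Rest = (\<lambda>m y. concat (map (\<lambda>u. replicate (cnt m y u - need m u) u) (vsl (n m))))"
  define Sy where "Sy = (\<lambda>m y. [c m] @ Pat m @ Rest m y @ [c m])"
  define L where "L = (\<lambda>k y. case k of 0 \<Rightarrow> [] | Suc m \<Rightarrow>
     (SOME Ls. distinct Ls \<and> set Ls = fibre DD (Suc m) y \<and> map (bs DD (Suc m)) Ls = Sy m y))"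
  have PatV: "set (Pat m) \<subseteq> bV B (n m)" for m
    using PPspec[of "\<sigma> m"] unfolding Pat_def n_def Spec_def by (cases "PP (p (\<sigma> m))") auto
  have cnt_ge: "cnt m y u \<ge> Kn (n m)" if y: "y \<in> bV B (n (Suc m))" and u: "u \<in> bV B (n m)" for m y u
  proof -
    have "int (cnt m y u) = push B (n m) (n (Suc m)) (dl u) y" unfolding cnt_def using D_card[OF y] .
    also have "\<dots> \<ge> int (Kn (n m))" using nxt[of "\<sigma> m"] y u unfolding nS n_def sS by auto
    finally show ?thesis by simp
  qed
  have need_le: "need m u \<le> Kn (n m)" for m u
    unfolding need_def Kn_def Pat_def using count_le_len[of "fst (PP (n m))" u] by auto
  have cnt0: "cnt m y u = 0" if "u \<notin> bV B (n m)" for m y u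
  proof -
    have "\<forall>e\<in>fibre DD (Suc m) y. bs DD (Suc m) e \<noteq> u"
    proof (intro ballI notI)
      fix e assume "e \<in> fibre DD (Suc m) y" "bs DD (Suc m) e = u"
      then have "e \<in> bE DD (Suc m)" "u = bs DD (Suc m) e" unfolding fibre_def by auto
      then have "u \<in> bV DD m" using D_brat unfolding bratteli_def by blast
      then show False using that DV by simp
    qed
    then have "{e\<in>fibre DD (Suc m) y. bs DD (Suc m) e = u} = {}" by blast
    then show ?thesis unfolding cnt_def by (simp only: card.empty)
  qed
  have Lex: "distinct (L (Suc m) y) \<and> set (L (Suc m) y) = fibre DD (Suc m) y \<and> map (bs DD (Suc m)) (L (Suc m) y) = Sy m y"
    if y: "y \<in> bV DD (Suc m)" for m y
  proof -
    have yB: "y \<in> bV B (n (Suc m))" using y DV by simp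
    have "\<exists>Ls. distinct Ls \<and> set Ls = fibre DD (Suc m) y \<and> map (bs DD (Suc m)) Ls = Sy m y"
    proof (rule realize[OF D_fibre_fin], rule allI)
      fix u
      have cr: "count (mset (Rest m y)) u = (if u \<in> bV B (n m) then cnt m y u - need m u else 0)"
        unfolding Rest_def using count_rep[of "vsl (n m)" "\<lambda>u. cnt m y u - need m u" u] vsl by simp
      have cS: "count (mset (Sy m y)) u = need m u + count (mset (Rest m y)) u"
        unfolding Sy_def need_def by simp
      show "count (mset (Sy m y)) u = card {e \<in> fibre DD (Suc m) y. bs DD (Suc m) e = u}"
      proof (cases "u \<in> bV B (n m)")
        case True
        have "need m u \<le> cnt m y u" using need_le[of m u] cnt_ge[OF yB True] by linarith
        then show ?thesis using cS cr True unfolding cnt_def by simp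
      next
        case False
        have "u \<noteq> c m" using False cB unfolding c_def by auto
        moreover have "count (mset (Pat m)) u = 0" using PatV[of m] False by (auto simp: count_eq_zero_iff)
        ultimately have "need m u = 0" unfolding need_def by simp
        then show ?thesis using cS cr False cnt0[OF False, of y] unfolding cnt_def by simp
      qed
    qed
    then show ?thesis unfolding L_def by (simp, rule someI_ex)
  qed
  have lord: "lord DD L c"
  proof
    show "bratteli DD" by (rule D_brat)
    show "positive_incidence DD"
      unfolding positive_incidence_def
    proof (intro allI ballI)
      fix k v w assume v: "v \<in> bV DD k" and w: "w \<in> bV DD (Suc k)"
      have "cnt k w v \<ge> Kn (n k)" using cnt_ge v w DV by simp
      then have "cnt k w v \<noteq> 0" unfolding Kn_def by simp
      then have "{e \<in> fibre DD (Suc k) w. bs DD (Suc k) e = v} \<noteq> {}"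
      proof -
        assume h: "cnt k w v \<noteq> 0"
        show ?thesis
        proof
          assume "{e \<in> fibre DD (Suc k) w. bs DD (Suc k) e = v} = {}"
          then have "card {e \<in> fibre DD (Suc k) w. bs DD (Suc k) e = v} = 0" by (simp only: card.empty)
          then show False using h unfolding cnt_def by simp
        qed
      qed
      then show "\<exists>e\<in>bE DD (Suc k). bs DD (Suc k) e = v \<and> br DD (Suc k) e = w" unfolding fibre_def by blast
    qed
    fix k v assume v: "v \<in> bV DD (Suc k)"
    note l = Lex[OF v]
    have ne: "L (Suc k) v \<noteq> []" using l unfolding Sy_def by auto
    show "set (L (Suc k) v) = fibre DD (Suc k) v" "distinct (L (Suc k) v)" using l by auto
    show "L (Suc k) v \<noteq> []" by (rule ne)
    have "hd (map (bs DD (Suc k)) (L (Suc k) v)) = c k" using l unfolding Sy_def by simp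
    then show "bs DD (Suc k) (hd (L (Suc k) v)) = c k" using ne by (simp add: hd_map)
    have "last (map (bs DD (Suc k)) (L (Suc k) v)) = c k" using l unfolding Sy_def by simp
    then show "bs DD (Suc k) (last (L (Suc k) v)) = c k" using ne by (simp add: last_map)
  next
    fix k show "c k \<in> bV DD k" using cB DV unfolding c_def by simp
  qed
  have tb: "tbrat B n" by (rule tbrat.intro[OF brat_axioms]) (simp add: tbrat_axioms_def ntel)
  interpret tlord B n L c by (rule tlord.intro[OF tb lord])
  have Hnn: "\<forall>m. \<forall>v\<in>bV B (n m). H (n m) v \<ge> 0"
    unfolding n_def using H_pos by (auto intro: order_trans[OF zero_le_one])
  have hhn: "hh m v = hn (n m) v" if "v \<in> bV B (n m)" for m v
    using link[OF Hnn that] unfolding hn_def by simp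
  have "weakly_mixing (path_topology DD) (vershik DD om)"
  proof (rule wm)
    fix m
    obtain Pt Dm Hm where PPm: "PP (n m) = (Pt, Dm, Hm)" by (cases "PP (n m)") auto
    have Sp: "Spec (n m) (Pt, Dm, Hm)" using PPspec[of "\<sigma> m"] PPm unfolding n_def by simp
    have Ptm: "Pat m = Pt" unfolding Pat_def PPm by simp
    have "bV DD (Suc m) \<noteq> {}" using V_ne DV by simp
    then obtain z where z: "z \<in> bV DD (Suc m)" by blast
    note lz = Lex[OF z]
    show "\<exists>Dm Hm z. (\<forall>v\<in>bV DD m. hh m v \<le> Hm) \<and> z \<in> bV DD (Suc m) \<and>
     (\<forall>v\<in>bV DD m. \<forall>w\<in>bV DD m. \<forall>d. Dm \<le> d \<and> d \<le> Dm + 4 * Hm \<longrightarrow>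
        (\<exists>e e'. e \<in> fibre DD (Suc m) z \<and> e' \<in> fibre DD (Suc m) z \<and> bs DD (Suc m) e = v \<and>
           bs DD (Suc m) e' = w \<and> off m e' = off m e + d))"
    proof (rule exI[of _ Dm], rule exI[of _ Hm], rule exI[of _ z], intro conjI ballI allI impI)
      show "z \<in> bV DD (Suc m)" by (rule z)
      fix v assume v: "v \<in> bV DD m"
      show "hh m v \<le> Hm" using Sp v DV hhn[of v m] unfolding Spec_def by simp
    next
      fix v w d assume v: "v \<in> bV DD m" and w: "w \<in> bV DD m" and d: "Dm \<le> d \<and> d \<le> Dm + 4 * Hm"
      let ?Lz = "L (Suc m) z" let ?S = "Sy m z"
      have S: "?S = [c m] @ Pt @ (Rest m z @ [c m])" unfolding Sy_def Ptm by simp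
      have Sp': "\<forall>A C v w d. v \<in> bV B (n m) \<longrightarrow> w \<in> bV B (n m) \<longrightarrow> Dm \<le> d \<longrightarrow> d \<le> Dm + 4 * Hm \<longrightarrow>
      (\<exists>r r'. r < r' \<and> r' < length (A @ Pt @ C) \<and> (A @ Pt @ C) ! r = v \<and> (A @ Pt @ C) ! r' = w \<and>
         sum_list (map (hn (n m)) (take r' (A @ Pt @ C))) = sum_list (map (hn (n m)) (take r (A @ Pt @ C))) + d)"
        using Sp unfolding Spec_def prod.case by (elim conjE)
      have vB: "v \<in> bV B (n m)" and wB: "w \<in> bV B (n m)" using v w DV by auto
      from Sp'[rule_format, of v w d "[c m]" "Rest m z @ [c m]", OF vB wB conjunct1[OF d] conjunct2[OF d]]
      obtain r r' where rr: "r < r'" "r' < length ?S" "?S ! r = v" "?S ! r' = w"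
        "sum_list (map (hn (n m)) (take r' ?S)) = sum_list (map (hn (n m)) (take r ?S)) + d"
        unfolding S[symmetric] by blast
      have len: "length ?Lz = length ?S" using lz by (metis length_map)
      have rl: "r < length ?Lz" "r' < length ?Lz" using rr len by auto
      define e where "e = ?Lz ! r"
      define e' where "e' = ?Lz ! r'"
      have ef: "e \<in> fibre DD (Suc m) z" "e' \<in> fibre DD (Suc m) z" unfolding e_def e'_def
        using lz rl nth_mem by blast+
      have bse: "bs DD (Suc m) e = v" "bs DD (Suc m) e' = w" unfolding e_def e'_def
        using lz rl rr by (metis nth_map)+
      have offk: "off m (?Lz ! k) = sum_list (map (hn (n m)) (take k ?S))" if k: "k < length ?Lz" for k
      proof -
        have brk: "br DD (Suc m) (?Lz ! k) = z" and ixk: "ix (Suc m) (?Lz ! k) = k" using nth_L[OF z k] by auto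
        have "off m (?Lz ! k) = sum_list (map (\<lambda>e''. hh m (bs DD (Suc m) e'')) (take k ?Lz))"
          unfolding off_def brk ixk ..
        also have "\<dots> = sum_list (map (\<lambda>e''. hn (n m) (bs DD (Suc m) e'')) (take k ?Lz))"
        proof (rule sum_list_cong)
          fix e'' assume "e'' \<in> set (take k ?Lz)"
          then have "e'' \<in> set ?Lz" by (rule in_set_takeD)
          then have "e'' \<in> fibre DD (Suc m) z" using lz by blast
          then have "e'' \<in> bE DD (Suc m)" using fibre_E by blast
          then have "bs DD (Suc m) e'' \<in> bV B (n m)" using DE_bs DV by blast
          then show "hh m (bs DD (Suc m) e'') = hn (n m) (bs DD (Suc m) e'')" by (rule hhn)
        qed
        also have "\<dots> = sum_list (map (hn (n m)) (take k (map (bs DD (Suc m)) ?Lz)))"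
          by (simp add: take_map comp_def)
        also have "\<dots> = sum_list (map (hn (n m)) (take k ?S))" using lz by simp
        finally show ?thesis .
      qed
      have "off m e' = off m e + d" unfolding e_def e'_def using offk[OF rl(1)] offk[OF rl(2)] rr(5) by simp
      then show "\<exists>e e'. e \<in> fibre DD (Suc m) z \<and> e' \<in> fibre DD (Suc m) z \<and> bs DD (Suc m) e = v \<and>
           bs DD (Suc m) e' = w \<and> off m e' = off m e + d" using ef bse by blast
    qed
  qed
  then show ?thesis using proper ntel by blast
qed

end

theorem mainTheorem2:
  fixes B :: "('v, 'e) bdiag"
  assumes "simple_bratteli B"
    and "rational_subgroup B = int_multiples_of_unit B"
  shows "\<exists>n om. is_telescoping_seq n \<and> proper_ordering (telescope B n) om \<and>
           weakly_mixing (path_topology (telescope B n)) (vershik (telescope B n) om)"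
proof -
  obtain p where br: "bratteli B" and pt: "is_telescoping_seq p" and pp: "positive_incidence (telescope B p)"
    using assms(1) unfolding simple_bratteli_def by blast
  interpret pbrat B p by (rule pbrat.intro, rule brat.intro[OF br], rule pbrat_axioms.intro[OF pt pp])
  show ?thesis
  proof (cases "\<exists>a0. \<exists>v\<in>bV B (p a0). H (p a0) v \<ge> 2")
    case True
    then show ?thesis by (rule nontrivial_case[OF assms(2)])
  next
    case False
    have "\<forall>a. \<forall>v\<in>bV B (p a). H (p a) v = 1"
    proof (intro allI ballI)
      fix a v assume v: "v \<in> bV B (p a)"
      have "H (p a) v \<ge> 1" using H_pos[OF v] .
      moreover have "\<not> H (p a) v \<ge> 2" using False v by blast
      ultimately show "H (p a) v = 1" by linarith
    qed
    then show ?thesis by (rule trivial_case)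
  qed
qed

end
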